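(* Let $d\ge2$, $b_0:[t_0,T]\to\mathbb{R}$, $b:[t_0,T]\to\mathbb{R}^{d^2-1}$ continuous, $H(t)=b_0(t)\mathbb{I}+\sqrt{d/2}\,b(t)\cdot\Lambda$. Suppose $n:[t_0,T]\to\mathbb{R}^{d^2-1}$ is continuously differentiable with $n(t_0)=0$ and $$U_H(t,t_0)=\exp\Bigl\{-i\int_{t_0}^tb_0(\tau)d\tau\Bigr\}\exp\Bigl\{-i\sqrt{\tfrac d2}\,(n(t)\cdot\Lambda)\Bigr\}\quad\text{for all }t\in[t_0,T].$$ Then the solution $(u_0,\tilde u)$ of the Cauchy problem $\dot u_0=\sum_j b_j\tilde u_j$, $\dot{\tilde u}_j=-u_0b_j+\sqrt{d/2}\sum_{k,m}(f_{kmj}-i d_{kmj})b_k\tilde u_m$, $u_0(t_0)=1$, $\tilde u(t_0)=0$, is given by $u_0(t)=\frac1dK_d(n(t))$, $\tilde u(t)=\frac1d\nabla K_d(n(t))$, and for all $t\in(t_0,T)$: (i) $\sum_{j}\frac{\partial K_d}{\partial r_j}(n(t))\,\bigl(\dot n_j(t)-b_j(t)\bigr)=0$ (i.e. $\dot n=b+n_\perp$ with $n_\perp\cdot\nabla K_d(n)=0$, using the bilinear dot product); (ii) for each $j=1,\dots,d^2-1$, $$\sum_l\frac{\partial^2K_d}{\partial r_j\partial r_l}(n(t))\,\dot n_l(t)=-b_j(t)K_d(n(t))+\sqrt{\tfrac d2}\sum_{k,m}\bigl(f_{kmj}-i\,d_{kmj}\bigr)b_k(t)\frac{\partial K_d}{\partial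 r_m}(n(t)).$$
   Context: $\Lambda=(\Lambda_1,\dots,\Lambda_{d^2-1})$ are traceless Hermitian generators of $SU(d)$ with $\mathrm{tr}(\Lambda_k\Lambda_m)=2\delta_{km}$ and $\Lambda_k\Lambda_m=\frac2d\delta_{km}\mathbb{I}+\sum_j(d_{kmj}+i f_{kmj})\Lambda_j$ with real structure constants $d_{kmj}$ (symmetric), $f_{kmj}$ (antisymmetric). $r\cdot\Lambda=\sum_jr_j\Lambda_j$. $K_d(r):=\mathrm{tr}\exp\{-i\sqrt{d/2}(r\cdot\Lambda)\}$ for $r\in\mathbb{R}^{d^2-1}$. $U_H(t,t_0)$ is the solution of $i\frac{d}{dt}U_H(t,t_0)=H(t)U_H(t,t_0)$, $U_H(t_0,t_0)=\mathbb{I}$. *)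

theory Defs
  imports "HOL-Analysis.Analysis" "Jordan_Normal_Form.Matrix"
begin

text \<open>Vectors in R^(d^2-1) are functions nat => real, only indices 0..<d^2-1 matter
(the paper's index j = 1..d^2-1 corresponds to j-1 here).\<close>

definition mtrace :: "complex mat \<Rightarrow> complex" where
  "mtrace A = (\<Sum>i<dim_row A. A $$ (i,i))"

definition hermitian_mat :: "nat \<Rightarrow> complex mat \<Rightarrow> bool" where
  "hermitian_mat d A \<longleftrightarrow> A \<in> carrier_mat d d \<and>
     (\<forall>a<d. \<forall>c<d. A $$ (a,c) = cnj (A $$ (c,a)))"

definition mexp :: "nat \<Rightarrow> complex mat \<Rightarrow> complex mat" where
  "mexp d A = mat d d (\<lambda>(a,c). \<Sum>k. (A ^\<^sub>m k) $$ (a,c) / of_nat (fact k))"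

definition lincomb :: "nat \<Rightarrow> nat \<Rightarrow> (nat \<Rightarrow> complex) \<Rightarrow> (nat \<Rightarrow> complex mat) \<Rightarrow> complex mat" where
  "lincomb d N r L = mat d d (\<lambda>(a,c). \<Sum>j<N. r j * L j $$ (a,c))"

definition Kd :: "nat \<Rightarrow> (nat \<Rightarrow> complex mat) \<Rightarrow> (nat \<Rightarrow> real) \<Rightarrow> complex" where
  "Kd d L r = mtrace (mexp d ((- \<i> * complex_of_real (sqrt (real d / 2))) \<cdot>\<^sub>m
       lincomb d (d\<^sup>2 - 1) (\<lambda>j. complex_of_real (r j)) L))"

definition pderiv_j :: "nat \<Rightarrow> ((nat \<Rightarrow> real) \<Rightarrow> complex) \<Rightarrow> (nat \<Rightarrow> real) \<Rightarrow> complex" where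
  "pderiv_j j F r = vector_derivative (\<lambda>s. F (r(j := s))) (at (r j))"

definition su_generators ::
  "nat \<Rightarrow> (nat \<Rightarrow> complex mat) \<Rightarrow> (nat \<Rightarrow> nat \<Rightarrow> nat \<Rightarrow> real) \<Rightarrow> (nat \<Rightarrow> nat \<Rightarrow> nat \<Rightarrow> real) \<Rightarrow> bool" where
  "su_generators d L dd ff \<longleftrightarrow>
     (\<forall>k < d\<^sup>2 - 1. hermitian_mat d (L k) \<and> mtrace (L k) = 0) \<and>
     (\<forall>k < d\<^sup>2 - 1. \<forall>m < d\<^sup>2 - 1. mtrace (L k * L m) = (if k = m then 2 else 0)) \<and>
     (\<forall>k < d\<^sup>2 - 1. \<forall>m < d\<^sup>2 - 1.
        L k * L m = (if k = m then complex_of_real (2 / real d) else 0) \<cdot>\<^sub>m 1\<^sub>m d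
                    + lincomb d (d\<^sup>2 - 1) (\<lambda>j. complex_of_real (dd k m j) + \<i> * complex_of_real (ff k m j)) L) \<and>
     (\<forall>k m j. dd k m j = dd m k j \<and> ff k m j = - ff m k j)"

end

theory Submission imports Defs begin

lemma mult_entry:
  "A \<in> carrier_mat n m \<Longrightarrow> B \<in> carrier_mat m k \<Longrightarrow> i < n \<Longrightarrow> j < k \<Longrightarrow>
   (A * B) $$ (i,j) = (\<Sum>l<m. A $$ (i,l) * B $$ (l,j))"
  by (auto simp: index_mult_mat scalar_prod_def atLeast0LessThan intro!: sum.cong)

declare index_mult_mat(1)[simp del]

lemma mult_cm[simp]: "(A::complex mat) \<in> carrier_mat n n \<Longrightarrow> B \<in> carrier_mat n n \<Longrightarrow> A * B \<in> carrier_mat n n"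
  by (rule mult_carrier_mat)

lemma assoc_d: "(A::complex mat) \<in> carrier_mat n n \<Longrightarrow> B \<in> carrier_mat n n \<Longrightarrow> C \<in> carrier_mat n n \<Longrightarrow> A * B * C = A * (B * C)"
  by (rule assoc_mult_mat)

lemma left_one_d: "(A::complex mat) \<in> carrier_mat n n \<Longrightarrow> 1\<^sub>m n * A = A"
  by (rule left_mult_one_mat)

lemma mtrace_carrier: "A \<in> carrier_mat n n \<Longrightarrow> mtrace A = (\<Sum>i<n. A $$ (i,i))"
  by (simp add: mtrace_def)

lemma mtrace_comm:
  assumes "A \<in> carrier_mat n m" "B \<in> carrier_mat m n"
  shows "mtrace (A * B) = mtrace (B * A)"
proof -
  have "mtrace (A * B) = (\<Sum>i<n. \<Sum>l<m. A $$ (i,l) * B $$ (l,i))"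
    using assms by (subst mtrace_carrier[of _ n]) (auto intro!: sum.cong mult_entry)
  also have "\<dots> = (\<Sum>l<m. \<Sum>i<n. B $$ (l,i) * A $$ (i,l))"
    by (subst sum.swap) (simp add: mult.commute)
  also have "\<dots> = mtrace (B * A)"
    using assms by (subst mtrace_carrier[of _ m]) (auto intro!: sum.cong mult_entry[symmetric])
  finally show ?thesis .
qed

lemma mtrace_add: "A \<in> carrier_mat n n \<Longrightarrow> B \<in> carrier_mat n n \<Longrightarrow> mtrace (A + B) = mtrace A + mtrace B"
  by (simp add: mtrace_def sum.distrib)

lemma mtrace_smult: "A \<in> carrier_mat n n \<Longrightarrow> mtrace (c \<cdot>\<^sub>m A) = c * mtrace A"
  by (simp add: mtrace_def sum_distrib_left)

lemma mtrace_one: "mtrace (1\<^sub>m n) = of_nat n"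
  by (simp add: mtrace_def)

lemma mtrace_zero: "mtrace (0\<^sub>m n n) = 0"
  by (simp add: mtrace_def)

lemma trace_triple:
  assumes "A \<in> carrier_mat n n" "M \<in> carrier_mat n n" "B \<in> carrier_mat n n"
  shows "mtrace (A * M * B) = (\<Sum>i<n. \<Sum>j<n. \<Sum>k<n. A $$ (i,j) * M $$ (j,k) * B $$ (k,i))"
proof -
  have AM: "A * M \<in> carrier_mat n n" using assms by simp
  have "mtrace (A * M * B) = (\<Sum>i<n. \<Sum>k<n. (A * M) $$ (i,k) * B $$ (k,i))"
    unfolding mtrace_carrier[OF mult_carrier_mat[OF AM assms(3)]]
    by (rule sum.cong[OF refl], rule mult_entry[OF AM assms(3)], auto)
  also have "\<dots> = (\<Sum>i<n. \<Sum>k<n. \<Sum>j<n. A $$ (i,j) * M $$ (j,k) * B $$ (k,i))"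
    using assms by (auto intro!: sum.cong simp: mult_entry[of A n n M n] sum_distrib_right)
  also have "\<dots> = (\<Sum>i<n. \<Sum>j<n. \<Sum>k<n. A $$ (i,j) * M $$ (j,k) * B $$ (k,i))"
    by (intro sum.cong refl sum.swap)
  finally show ?thesis .
qed

lemma lincomb_carrier[simp]: "lincomb d N r L \<in> carrier_mat d d"
  by (simp add: lincomb_def)

lemma lincomb_dims[simp]: "dim_row (lincomb d N r L) = d" "dim_col (lincomb d N r L) = d"
  by (simp_all add: lincomb_def)

lemma lincomb_entry: "i < d \<Longrightarrow> j < d \<Longrightarrow> lincomb d N r L $$ (i,j) = (\<Sum>l<N. r l * L l $$ (i,j))"
  by (simp add: lincomb_def)

lemma trace_lincomb:
  assumes "A \<in> carrier_mat d d" "B \<in> carrier_mat d d" "\<forall>l<N. L l \<in> carrier_mat d d"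
  shows "mtrace (A * lincomb d N r L * B) = (\<Sum>l<N. r l * mtrace (A * L l * B))"
proof -
  have "mtrace (A * lincomb d N r L * B) = (\<Sum>i<d. \<Sum>j<d. \<Sum>k<d. A $$ (i,j) * (\<Sum>l<N. r l * L l $$ (j,k)) * B $$ (k,i))"
    using assms by (simp add: trace_triple lincomb_entry)
  also have "\<dots> = (\<Sum>i<d. \<Sum>j<d. \<Sum>k<d. \<Sum>l<N. r l * (A $$ (i,j) * L l $$ (j,k) * B $$ (k,i)))"
    by (simp add: sum_distrib_left sum_distrib_right mult_ac)
  also have "\<dots> = (\<Sum>l<N. \<Sum>i<d. \<Sum>j<d. \<Sum>k<d. r l * (A $$ (i,j) * L l $$ (j,k) * B $$ (k,i)))"
    by (simp only: sum.swap[where B="{..<N}"])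
  also have "\<dots> = (\<Sum>l<N. r l * mtrace (A * L l * B))"
    using assms by (auto intro!: sum.cong simp: trace_triple sum_distrib_left)
  finally show ?thesis .
qed

lemma trace_smult_mid:
  assumes "A \<in> carrier_mat d d" "Q \<in> carrier_mat d d" "B \<in> carrier_mat d d"
  shows "mtrace (A * (c \<cdot>\<^sub>m Q) * B) = c * mtrace (A * Q * B)"
  using assms by (simp only: trace_triple smult_carrier_mat) (simp add: sum_distrib_left mult_ac)


definition mnorm :: "nat \<Rightarrow> complex mat \<Rightarrow> real" where
  "mnorm d X = (\<Sum>a<d. \<Sum>c<d. cmod (X $$ (a,c)))"

lemma mnorm_nonneg: "0 \<le> mnorm d X"
  by (simp add: mnorm_def sum_nonneg)

lemma entry_le_mnorm: "a < d \<Longrightarrow> c < d \<Longrightarrow> cmod (X $$ (a,c)) \<le> mnorm d X"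
proof -
  assume "a < d" "c < d"
  have "cmod (X $$ (a,c)) \<le> (\<Sum>c<d. cmod (X $$ (a,c)))"
    using \<open>c < d\<close> by (intro member_le_sum) auto
  also have "\<dots> \<le> mnorm d X" unfolding mnorm_def
    using \<open>a < d\<close> by (intro member_le_sum[where f="\<lambda>a. \<Sum>c<d. cmod (X $$ (a,c))"]) (auto intro: sum_nonneg)
  finally show ?thesis .
qed

lemma row_le_mnorm: "b < d \<Longrightarrow> (\<Sum>c<d. cmod (X $$ (b,c))) \<le> mnorm d X"
  unfolding mnorm_def by (intro member_le_sum[where f="\<lambda>a. \<Sum>c<d. cmod (X $$ (a,c))"]) (auto intro: sum_nonneg)

lemma mnorm_mult:
  assumes "X \<in> carrier_mat d d" "Y \<in> carrier_mat d d"
  shows "mnorm d (X * Y) \<le> mnorm d X * mnorm d Y"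
proof -
  have "mnorm d (X * Y) = (\<Sum>a<d. \<Sum>c<d. cmod (\<Sum>b<d. X $$ (a,b) * Y $$ (b,c)))"
    unfolding mnorm_def using assms by (auto intro!: sum.cong simp: mult_entry)
  also have "\<dots> \<le> (\<Sum>a<d. \<Sum>c<d. \<Sum>b<d. cmod (X $$ (a,b)) * cmod (Y $$ (b,c)))"
    by (intro sum_mono order_trans[OF norm_sum]) (simp add: norm_mult)
  also have "\<dots> = (\<Sum>a<d. \<Sum>b<d. cmod (X $$ (a,b)) * (\<Sum>c<d. cmod (Y $$ (b,c))))"
    by (simp only: sum_distrib_left mult.assoc, rule sum.cong[OF refl], rule sum.swap)
  also have "\<dots> \<le> (\<Sum>a<d. \<Sum>b<d. cmod (X $$ (a,b)) * mnorm d Y)"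
    by (intro sum_mono mult_left_mono row_le_mnorm) auto
  also have "\<dots> = mnorm d X * mnorm d Y"
    by (simp add: mnorm_def sum_distrib_right)
  finally show ?thesis .
qed

lemma mtrace_le_mnorm:
  assumes "X \<in> carrier_mat d d"
  shows "cmod (mtrace X) \<le> mnorm d X"
proof -
  have "cmod (mtrace X) \<le> (\<Sum>i<d. cmod (X $$ (i,i)))"
    using assms by (simp add: mtrace_carrier norm_sum)
  also have "\<dots> \<le> (\<Sum>i<d. \<Sum>c<d. cmod (X $$ (i,c)))"
    by (intro sum_mono member_le_sum) auto
  finally show ?thesis by (simp add: mnorm_def)
qed

lemma mnorm_one: "mnorm d (1\<^sub>m d) = real d"
proof -
  have "mnorm d (1\<^sub>m d) = (\<Sum>a<d. \<Sum>c<d. cmod ((1\<^sub>m d :: complex mat) $$ (a,c)))"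
    by (simp add: mnorm_def)
  also have "\<dots> = (\<Sum>a<d. 1::real)"
  proof (rule sum.cong[OF refl])
    fix a assume a: "a \<in> {..<d}"
    have "(\<Sum>c<d. cmod ((1\<^sub>m d :: complex mat) $$ (a,c))) = (\<Sum>c<d. if a = c then 1 else 0)"
      by (rule sum.cong) (use a in auto)
    also have "\<dots> = 1" using a by (simp add: sum.delta)
    finally show "(\<Sum>c<d. cmod ((1\<^sub>m d :: complex mat) $$ (a,c))) = 1" .
  qed
  also have "\<dots> = real d" by simp
  finally show ?thesis .
qed

lemma mnorm_pow:
  assumes "X \<in> carrier_mat d d"
  shows "mnorm d (X ^\<^sub>m k) \<le> (real d + 1) * mnorm d X ^ k"
proof (induction k)
  case 0
  then show ?case using assms by (simp add: mnorm_one)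
next
  case (Suc k)
  have "mnorm d (X ^\<^sub>m Suc k) = mnorm d (X ^\<^sub>m k * X)" by simp
  also have "\<dots> \<le> mnorm d (X ^\<^sub>m k) * mnorm d X"
    using assms by (intro mnorm_mult) auto
  also have "\<dots> \<le> (real d + 1) * mnorm d X ^ k * mnorm d X"
    using Suc mnorm_nonneg by (intro mult_right_mono) auto
  finally show ?case by (simp add: mult_ac)
qed

lemma mnorm_smult: "X \<in> carrier_mat d d \<Longrightarrow> mnorm d (c \<cdot>\<^sub>m X) = cmod c * mnorm d X"
  unfolding mnorm_def by (auto simp: norm_mult sum_distrib_left intro!: sum.cong)

lemma mnorm_lincomb:
  assumes "\<forall>l<N. L l \<in> carrier_mat d d"
  shows "mnorm d (lincomb d N r L) \<le> (\<Sum>l<N. cmod (r l) * mnorm d (L l))"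
proof -
  have "mnorm d (lincomb d N r L) = (\<Sum>a<d. \<Sum>c<d. cmod (\<Sum>l<N. r l * L l $$ (a,c)))"
    unfolding mnorm_def by (auto intro!: sum.cong simp: lincomb_entry)
  also have "\<dots> \<le> (\<Sum>a<d. \<Sum>c<d. \<Sum>l<N. cmod (r l) * cmod (L l $$ (a,c)))"
    by (intro sum_mono order_trans[OF norm_sum]) (simp add: norm_mult)
  also have "\<dots> = (\<Sum>l<N. cmod (r l) * mnorm d (L l))"
    by (simp add: mnorm_def sum_distrib_left sum.swap[where B="{..<N}"])
  finally show ?thesis .
qed

lemma mexp_entry: "a < d \<Longrightarrow> c < d \<Longrightarrow> mexp d X $$ (a,c) = (\<Sum>k. (X ^\<^sub>m k) $$ (a,c) / of_nat (fact k))"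
  by (simp add: mexp_def)

lemma mexp_dims[simp]: "dim_row (mexp d X) = d" "dim_col (mexp d X) = d"
  by (simp_all add: mexp_def)

lemma mexp_carrier[simp]: "mexp d X \<in> carrier_mat d d"
  by (simp add: mexp_def)

lemma exp_bound_summable: "summable (\<lambda>k. C * x ^ k / fact k :: real)"
  using summable_mult[OF summable_exp_generic[of x], of C]
  by (simp add: field_simps)

lemma mexp_entry_sums:
  assumes "X \<in> carrier_mat d d" "a < d" "c < d"
  shows "(\<lambda>k. (X ^\<^sub>m k) $$ (a,c) / of_nat (fact k)) sums (mexp d X $$ (a,c))"
proof -
  have "summable (\<lambda>k. (X ^\<^sub>m k) $$ (a,c) / of_nat (fact k))"
  proof (rule summable_comparison_test[OF _ exp_bound_summable[of "real d + 1" "mnorm d X"]])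
    show "\<exists>N. \<forall>n\<ge>N. norm ((X ^\<^sub>m n) $$ (a,c) / of_nat (fact n)) \<le> (real d + 1) * mnorm d X ^ n / fact n"
    proof (intro exI allI impI)
      fix n :: nat
      have "norm ((X ^\<^sub>m n) $$ (a,c) / of_nat (fact n)) = cmod ((X ^\<^sub>m n) $$ (a,c)) / fact n"
        by (simp add: norm_divide)
      also have "\<dots> \<le> (real d + 1) * mnorm d X ^ n / fact n"
        using order_trans[OF entry_le_mnorm[OF assms(2,3)] mnorm_pow[OF assms(1)]]
        by (intro divide_right_mono) auto
      finally show "norm ((X ^\<^sub>m n) $$ (a,c) / of_nat (fact n)) \<le> (real d + 1) * mnorm d X ^ n / fact n" .
    qed
  qed
  then show ?thesis using assms by (simp add: mexp_entry summable_sums)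
qed

lemma trace_mexp_sums:
  assumes "X \<in> carrier_mat d d" "P \<in> carrier_mat d d"
  shows "(\<lambda>k. mtrace (P * X ^\<^sub>m k) / of_nat (fact k)) sums mtrace (P * mexp d X)"
proof -
  have "(\<lambda>k. \<Sum>a<d. \<Sum>b<d. P $$ (a,b) * ((X ^\<^sub>m k) $$ (b,a) / of_nat (fact k)))
        sums (\<Sum>a<d. \<Sum>b<d. P $$ (a,b) * mexp d X $$ (b,a))"
    using assms by (intro sums_sum sums_mult mexp_entry_sums) auto
  moreover have "(\<lambda>k. \<Sum>a<d. \<Sum>b<d. P $$ (a,b) * ((X ^\<^sub>m k) $$ (b,a) / of_nat (fact k)))
      = (\<lambda>k. mtrace (P * X ^\<^sub>m k) / of_nat (fact k))"
  proof
    fix k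
    have "mtrace (P * X ^\<^sub>m k) = (\<Sum>a<d. \<Sum>b<d. P $$ (a,b) * (X ^\<^sub>m k) $$ (b,a))"
      using assms by (auto simp: mtrace_carrier[of _ d] intro!: sum.cong mult_entry)
    then show "(\<Sum>a<d. \<Sum>b<d. P $$ (a,b) * ((X ^\<^sub>m k) $$ (b,a) / of_nat (fact k)))
      = mtrace (P * X ^\<^sub>m k) / of_nat (fact k)"
      by (simp add: sum_divide_distrib)
  qed
  moreover have "mtrace (P * mexp d X) = (\<Sum>a<d. \<Sum>b<d. P $$ (a,b) * mexp d X $$ (b,a))"
    using assms by (auto simp: mtrace_carrier[of _ d] intro!: sum.cong mult_entry)
  ultimately show ?thesis by simp
qed


definition mhd :: "nat \<Rightarrow> (real \<Rightarrow> complex mat) \<Rightarrow> complex mat \<Rightarrow> real \<Rightarrow> real set \<Rightarrow> bool" where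
  "mhd d X X' x S \<longleftrightarrow> (\<forall>a<d. \<forall>c<d. ((\<lambda>s. X s $$ (a,c)) has_vector_derivative X' $$ (a,c)) (at x within S))"

lemma mhd_mult:
  assumes XC: "\<And>s. X s \<in> carrier_mat d d" and YC: "\<And>s. Y s \<in> carrier_mat d d"
    and X'C: "X' \<in> carrier_mat d d" and Y'C: "Y' \<in> carrier_mat d d"
    and DX: "mhd d X X' x S" and DY: "mhd d Y Y' x S"
  shows "mhd d (\<lambda>s. X s * Y s) (X' * Y x + X x * Y') x S"
  unfolding mhd_def
proof (intro allI impI)
  fix a c assume a: "a < d" and c: "c < d"
  have eq: "(\<lambda>s. (X s * Y s) $$ (a,c)) = (\<lambda>s. \<Sum>b<d. X s $$ (a,b) * Y s $$ (b,c))"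
    using XC YC a c by (auto intro!: mult_entry)
  have "((\<lambda>s. \<Sum>b<d. X s $$ (a,b) * Y s $$ (b,c)) has_vector_derivative
        (\<Sum>b<d. X x $$ (a,b) * Y' $$ (b,c) + X' $$ (a,b) * Y x $$ (b,c))) (at x within S)"
    using DX DY a c unfolding mhd_def
    by (intro has_vector_derivative_sum has_vector_derivative_mult) auto
  moreover have "(\<Sum>b<d. X x $$ (a,b) * Y' $$ (b,c) + X' $$ (a,b) * Y x $$ (b,c))
      = (X' * Y x + X x * Y') $$ (a,c)"
  proof -
    have "(X' * Y x + X x * Y') $$ (a,c) = (X' * Y x) $$ (a,c) + (X x * Y') $$ (a,c)"
      using a c X'C YC[of x] XC[of x] Y'C by (subst index_add_mat) auto
    also have "\<dots> = (\<Sum>b<d. X' $$ (a,b) * Y x $$ (b,c)) + (\<Sum>b<d. X x $$ (a,b) * Y' $$ (b,c))"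
      using a c X'C YC XC Y'C by (simp add: mult_entry[of _ d d _ d])
    finally show ?thesis by (simp add: sum.distrib add.commute)
  qed
  ultimately show "((\<lambda>s. (X s * Y s) $$ (a,c)) has_vector_derivative (X' * Y x + X x * Y') $$ (a,c)) (at x within S)"
    by (simp add: eq)
qed

lemma mhd_const: "mhd d (\<lambda>s. C) (0\<^sub>m d d) x S"
  unfolding mhd_def by (auto intro: has_vector_derivative_const)

fun dpow :: "nat \<Rightarrow> complex mat \<Rightarrow> complex mat \<Rightarrow> nat \<Rightarrow> complex mat" where
  "dpow d X Q 0 = 0\<^sub>m d d"
| "dpow d X Q (Suc k) = dpow d X Q k * X + X ^\<^sub>m k * Q"

lemma dpow_carrier[simp]: "X \<in> carrier_mat d d \<Longrightarrow> Q \<in> carrier_mat d d \<Longrightarrow> dpow d X Q k \<in> carrier_mat d d"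
  by (induction k) auto

lemma mhd_pow:
  assumes XC: "\<And>s. X s \<in> carrier_mat d d" and X'C: "X' \<in> carrier_mat d d"
    and DX: "mhd d X X' x S"
  shows "mhd d (\<lambda>s. X s ^\<^sub>m k) (dpow d (X x) X' k) x S"
proof (induction k)
  case 0
  have "(\<lambda>s. X s ^\<^sub>m 0) = (\<lambda>s. 1\<^sub>m d)" by (rule ext) (simp add: carrier_matD(1)[OF XC])
  then show ?case using mhd_const[of d "1\<^sub>m d" x S] by simp
next
  case (Suc k)
  have "mhd d (\<lambda>s. X s ^\<^sub>m k * X s) (dpow d (X x) X' k * X x + X x ^\<^sub>m k * X') x S"
    using mhd_mult[OF _ XC _ X'C Suc DX] XC X'C by simp
  then show ?case by simp
qed

lemma mhd_trace:
  assumes PC: "P \<in> carrier_mat d d" and MC: "\<And>s. M s \<in> carrier_mat d d" and M'C: "M' \<in> carrier_mat d d"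
    and DM: "mhd d M M' x S"
  shows "((\<lambda>s. mtrace (P * M s)) has_vector_derivative mtrace (P * M')) (at x within S)"
proof -
  have eq: "\<And>A. A \<in> carrier_mat d d \<Longrightarrow> mtrace (P * A) = (\<Sum>a<d. \<Sum>b<d. P $$ (a,b) * A $$ (b,a))"
    using PC by (auto simp: mtrace_carrier[of _ d] intro!: sum.cong mult_entry)
  have "((\<lambda>s. \<Sum>a<d. \<Sum>b<d. P $$ (a,b) * M s $$ (b,a)) has_vector_derivative
         (\<Sum>a<d. \<Sum>b<d. P $$ (a,b) * M' $$ (b,a))) (at x within S)"
    using DM unfolding mhd_def
    by (intro has_vector_derivative_sum has_vector_derivative_mult_right) auto
  then show ?thesis using eq[OF M'C] eq[OF MC] by simp
qed

lemma trace_dpow: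
  assumes XC: "X \<in> carrier_mat d d" and QC: "Q \<in> carrier_mat d d" and PC: "P \<in> carrier_mat d d"
  shows "R \<in> carrier_mat d d \<Longrightarrow> mtrace (P * (dpow d X Q k * R)) =
     (\<Sum>p<k. mtrace (P * (X ^\<^sub>m p * (Q * (X ^\<^sub>m (k - Suc p) * R)))))"
proof (induction k arbitrary: R)
  case 0
  then show ?case using PC by (simp add: mtrace_zero)
next
  case (Suc k)
  have "dpow d X Q (Suc k) * R = dpow d X Q k * (X * R) + X ^\<^sub>m k * (Q * R)"
  proof -
    have c1: "dpow d X Q k * X \<in> carrier_mat d d" "X ^\<^sub>m k * Q \<in> carrier_mat d d"
      using mult_carrier_mat[OF dpow_carrier[OF XC QC] XC] XC QC by auto
    show ?thesis using c1 XC QC Suc.prems by (simp add: add_mult_distrib_mat[OF c1 Suc.prems] assoc_d[where n=d])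
  qed
  then have "mtrace (P * (dpow d X Q (Suc k) * R)) =
      mtrace (P * (dpow d X Q k * (X * R))) + mtrace (P * (X ^\<^sub>m k * (Q * R)))"
  proof -
    have c2: "dpow d X Q k * (X * R) \<in> carrier_mat d d" "X ^\<^sub>m k * (Q * R) \<in> carrier_mat d d"
      using mult_carrier_mat[OF dpow_carrier[OF XC QC] mult_carrier_mat[OF XC Suc.prems]] XC QC Suc.prems by auto
    show ?thesis unfolding \<open>dpow d X Q (Suc k) * R = _\<close>
      by (simp only: mult_add_distrib_mat[OF PC c2] mtrace_add[OF mult_carrier_mat[OF PC c2(1)] mult_carrier_mat[OF PC c2(2)]])
  qed
  also have "mtrace (P * (dpow d X Q k * (X * R))) =
     (\<Sum>p<k. mtrace (P * (X ^\<^sub>m p * (Q * (X ^\<^sub>m (k - Suc p) * (X * R))))))"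
    using Suc.IH[of "X * R"] XC Suc.prems by simp
  also have "\<dots> = (\<Sum>p<k. mtrace (P * (X ^\<^sub>m p * (Q * (X ^\<^sub>m (Suc k - Suc p) * R)))))"
  proof (rule sum.cong[OF refl])
    fix p assume "p \<in> {..<k}"
    then have e: "Suc k - Suc p = Suc (k - Suc p)" by auto
    have "X ^\<^sub>m (k - Suc p) * (X * R) = X ^\<^sub>m (Suc k - Suc p) * R"
      unfolding e using XC Suc.prems by (simp add: assoc_mult_mat[symmetric, of _ d d _ d _ d])
    then show "mtrace (P * (X ^\<^sub>m p * (Q * (X ^\<^sub>m (k - Suc p) * (X * R))))) =
        mtrace (P * (X ^\<^sub>m p * (Q * (X ^\<^sub>m (Suc k - Suc p) * R))))" by simp
  qed
  also have "mtrace (P * (X ^\<^sub>m k * (Q * R))) = mtrace (P * (X ^\<^sub>m k * (Q * (X ^\<^sub>m (Suc k - Suc k) * R))))"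
    using Suc.prems XC by simp
  finally show ?case by (simp add: add.commute)
qed


definition hterm :: "nat \<Rightarrow> complex mat \<Rightarrow> complex mat \<Rightarrow> complex mat \<Rightarrow> nat \<Rightarrow> complex" where
  "hterm d P Q X k = (\<Sum>p<k. mtrace (P * (X ^\<^sub>m p * (Q * X ^\<^sub>m (k - Suc p)))))"

lemma trace_dpow_hterm:
  assumes "X \<in> carrier_mat d d" "Q \<in> carrier_mat d d" "P \<in> carrier_mat d d"
  shows "mtrace (P * dpow d X Q k) = hterm d P Q X k"
proof -
  have "mtrace (P * dpow d X Q k) = mtrace (P * (dpow d X Q k * 1\<^sub>m d))"
    by (simp add: right_mult_one_mat[OF dpow_carrier[OF assms(1,2)]])
  also have "\<dots> = hterm d P Q X k"
    unfolding trace_dpow[OF assms one_carrier_mat] hterm_def using assms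
    by (intro sum.cong refl) simp
  finally show ?thesis .
qed

lemma term_bound:
  assumes PC: "P \<in> carrier_mat d d" and XC: "X \<in> carrier_mat d d" and QC: "Q \<in> carrier_mat d d"
    and XR: "mnorm d X \<le> R"
  shows "cmod (mtrace (P * (X ^\<^sub>m p * (Q * X ^\<^sub>m q)))) \<le> mnorm d P * mnorm d Q * (real d + 1)^2 * R ^ (p + q)"
proof -
  have R0: "0 \<le> R" using XR mnorm_nonneg order_trans by blast
  have pw: "mnorm d (X ^\<^sub>m m) \<le> (real d + 1) * R ^ m" for m
    using mnorm_pow[OF XC, of m] power_mono[OF XR mnorm_nonneg, of m]
    by (meson add_nonneg_nonneg mult_left_mono of_nat_0_le_iff order_trans zero_le_one)
  have "cmod (mtrace (P * (X ^\<^sub>m p * (Q * X ^\<^sub>m q)))) \<le> mnorm d (P * (X ^\<^sub>m p * (Q * X ^\<^sub>m q)))"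
    using PC XC QC by (intro mtrace_le_mnorm) auto
  also have "\<dots> \<le> mnorm d P * (mnorm d (X ^\<^sub>m p) * (mnorm d Q * mnorm d (X ^\<^sub>m q)))"
  proof -
    have "mnorm d (P * (X ^\<^sub>m p * (Q * X ^\<^sub>m q))) \<le> mnorm d P * mnorm d (X ^\<^sub>m p * (Q * X ^\<^sub>m q))"
      using PC XC QC by (intro mnorm_mult) auto
    also have "\<dots> \<le> mnorm d P * (mnorm d (X ^\<^sub>m p) * mnorm d (Q * X ^\<^sub>m q))"
      using PC XC QC by (intro mult_left_mono mnorm_mult mnorm_nonneg) auto
    also have "\<dots> \<le> mnorm d P * (mnorm d (X ^\<^sub>m p) * (mnorm d Q * mnorm d (X ^\<^sub>m q)))"
      using PC XC QC by (intro mult_left_mono mnorm_mult mnorm_nonneg mult_nonneg_nonneg) auto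
    finally show ?thesis .
  qed
  also have "\<dots> \<le> mnorm d P * (((real d + 1) * R ^ p) * (mnorm d Q * ((real d + 1) * R ^ q)))"
    using pw R0 by (intro mult_left_mono mult_mono mnorm_nonneg mult_nonneg_nonneg) auto
  also have "\<dots> = mnorm d P * mnorm d Q * (real d + 1)^2 * R ^ (p + q)"
    by (simp add: power_add power2_eq_square mult_ac)
  finally show ?thesis .
qed

lemma hterm_bound:
  assumes PC: "P \<in> carrier_mat d d" and XC: "X \<in> carrier_mat d d" and QC: "Q \<in> carrier_mat d d"
    and XR: "mnorm d X \<le> R"
  shows "cmod (hterm d P Q X k) \<le> mnorm d P * mnorm d Q * (real d + 1)^2 * (real k * R ^ (k - 1))"
proof -
  have "cmod (hterm d P Q X k) \<le> (\<Sum>p<k. mnorm d P * mnorm d Q * (real d + 1)^2 * R ^ (k - 1))"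
    unfolding hterm_def
  proof (rule order_trans[OF norm_sum], rule sum_mono)
    fix p assume "p \<in> {..<k}"
    then have "p + (k - Suc p) = k - 1" by auto
    then show "cmod (mtrace (P * (X ^\<^sub>m p * (Q * X ^\<^sub>m (k - Suc p))))) \<le> mnorm d P * mnorm d Q * (real d + 1)^2 * R ^ (k - 1)"
      using term_bound[OF PC XC QC XR, of p "k - Suc p"] by simp
  qed
  then show ?thesis by (simp add: mult_ac)
qed

lemma summable_kbound: "summable (\<lambda>k. C * (real k * R ^ (k - 1) / fact k))"
proof -
  have "summable (\<lambda>m. C * (real (Suc m) * R ^ (Suc m - 1) / fact (Suc m)))"
  proof -
    have "(\<lambda>m. C * (real (Suc m) * R ^ (Suc m - 1) / fact (Suc m))) = (\<lambda>m. C * R ^ m / fact m)"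
      by (rule ext) (simp add: fact_Suc field_simps del: of_nat_Suc)
    then show ?thesis using exp_bound_summable by simp
  qed
  then show ?thesis by (rule iffD1[OF summable_Suc_iff[of "\<lambda>k. C * (real k * R ^ (k - 1) / fact k)"]])
qed

lemma series_deriv:
  assumes S: "convex S" "x \<in> S"
    and XC: "\<And>s. X s \<in> carrier_mat d d" and X'C: "\<And>s. X' s \<in> carrier_mat d d"
    and PC: "P \<in> carrier_mat d d"
    and D: "\<And>s. s \<in> S \<Longrightarrow> mhd d X (X' s) s S"
    and BX: "\<And>s. s \<in> S \<Longrightarrow> mnorm d (X s) \<le> R"
    and BX': "\<And>s. s \<in> S \<Longrightarrow> mnorm d (X' s) \<le> R'"
  shows "((\<lambda>s. mtrace (P * mexp d (X s))) has_vector_derivative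
          (\<Sum>k. hterm d P (X' x) (X x) k / of_nat (fact k))) (at x within S)"
proof -
  define f where "f = (\<lambda>k s. mtrace (P * X s ^\<^sub>m k) / of_nat (fact k))"
  define Df where "Df = (\<lambda>k s. hterm d P (X' s) (X s) k / of_nat (fact k))"
  define G where "G = (\<lambda>s. \<Sum>k. Df k s)"
  define C where "C = mnorm d P * R' * (real d + 1)^2"
  have fd: "(f k has_vector_derivative Df k s) (at s within S)" if "s \<in> S" for k s
  proof -
    have "((\<lambda>s. mtrace (P * X s ^\<^sub>m k)) has_vector_derivative mtrace (P * dpow d (X s) (X' s) k)) (at s within S)"
      by (rule mhd_trace[OF PC _ _ mhd_pow[OF XC X'C[of s] D[OF that]]]) (use XC X'C in auto)
    then have "((\<lambda>s. mtrace (P * X s ^\<^sub>m k) * inverse (of_nat (fact k))) has_vector_derivative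
         mtrace (P * dpow d (X s) (X' s) k) * inverse (of_nat (fact k))) (at s within S)"
      by (rule has_vector_derivative_mult_left)
    then show ?thesis unfolding f_def Df_def
      using trace_dpow_hterm[OF XC X'C PC] by (simp add: divide_inverse)
  qed
  have bnd: "norm (Df k s) \<le> C * (real k * R ^ (k - 1) / fact k)" if "s \<in> S" for k s
  proof -
    have "cmod (hterm d P (X' s) (X s) k) \<le> mnorm d P * mnorm d (X' s) * (real d + 1)^2 * (real k * R ^ (k - 1))"
      by (rule hterm_bound[OF PC XC X'C BX[OF that]])
    also have "\<dots> \<le> mnorm d P * R' * (real d + 1)^2 * (real k * R ^ (k - 1))"
      using BX'[OF that] BX[OF that] mnorm_nonneg[of d "X s"]
      by (intro mult_right_mono mult_left_mono mult_nonneg_nonneg mnorm_nonneg zero_le_power) auto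
    finally show ?thesis unfolding Df_def C_def by (simp add: norm_divide divide_right_mono)
  qed
  have ul: "uniform_limit S (\<lambda>n s. \<Sum>i<n. Df i s) G sequentially"
    unfolding G_def by (rule Weierstrass_m_test[OF bnd summable_kbound])
  have "\<exists>g. \<forall>s\<in>S. (\<lambda>n. f n s) sums g s \<and> (g has_derivative (\<lambda>h. h *\<^sub>R G s)) (at s within S)"
  proof (rule has_derivative_series[OF S(1), where f'="\<lambda>n s h. h *\<^sub>R Df n s"])
    show "\<And>n s. s \<in> S \<Longrightarrow> (f n has_derivative (\<lambda>h. h *\<^sub>R Df n s)) (at s within S)"
      using fd by (simp add: has_vector_derivative_def)
    show "\<forall>\<^sub>F n in sequentially. \<forall>s\<in>S. \<forall>h. norm ((\<Sum>i<n. h *\<^sub>R Df i s) - h *\<^sub>R G s) \<le> e * norm h"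
      if "0 < e" for e
    proof -
      have "\<forall>\<^sub>F n in sequentially. \<forall>s\<in>S. dist (\<Sum>i<n. Df i s) (G s) < e"
        using ul that unfolding uniform_limit_iff by blast
      then show ?thesis
      proof (rule eventually_mono)
        fix n assume H: "\<forall>s\<in>S. dist (\<Sum>i<n. Df i s) (G s) < e"
        show "\<forall>s\<in>S. \<forall>h. norm ((\<Sum>i<n. h *\<^sub>R Df i s) - h *\<^sub>R G s) \<le> e * norm h"
        proof (intro ballI allI)
          fix s h assume "s \<in> S"
          have "norm ((\<Sum>i<n. h *\<^sub>R Df i s) - h *\<^sub>R G s) = \<bar>h\<bar> * dist (\<Sum>i<n. Df i s) (G s)"
            by (simp add: scaleR_sum_right[symmetric] scaleR_diff_right[symmetric] dist_norm)
          also have "\<dots> \<le> \<bar>h\<bar> * e" using H \<open>s \<in> S\<close> by (intro mult_left_mono) (auto intro: less_imp_le)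
          finally show "norm ((\<Sum>i<n. h *\<^sub>R Df i s) - h *\<^sub>R G s) \<le> e * norm h" by (simp add: mult.commute)
        qed
      qed
    qed
    show "x \<in> S" by fact
    show "(\<lambda>n. f n x) sums mtrace (P * mexp d (X x))"
      unfolding f_def by (rule trace_mexp_sums[OF XC PC])
  qed
  then obtain g where g: "\<And>s. s \<in> S \<Longrightarrow> (\<lambda>n. f n s) sums g s \<and> (g has_derivative (\<lambda>h. h *\<^sub>R G s)) (at s within S)"
    by blast
  have geq: "mtrace (P * mexp d (X s)) = g s" if "s \<in> S" for s
    using sums_unique2[OF trace_mexp_sums[OF XC PC, of s]] g[OF that] unfolding f_def by blast
  have "((\<lambda>s. mtrace (P * mexp d (X s))) has_derivative (\<lambda>h. h *\<^sub>R G x)) (at x within S)"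
    by (rule has_derivative_transform[OF S(2) geq]) (use g S(2) in blast)+
  then show ?thesis unfolding has_vector_derivative_def G_def Df_def .
qed


lemma pow_add_mat: "(X::complex mat) \<in> carrier_mat d d \<Longrightarrow> X ^\<^sub>m p * X ^\<^sub>m q = X ^\<^sub>m (p + q)"
proof (induction q)
  case 0
  then show ?case by simp
next
  case (Suc q)
  have "X ^\<^sub>m p * X ^\<^sub>m Suc q = X ^\<^sub>m p * (X ^\<^sub>m q * X)" by simp
  also have "\<dots> = X ^\<^sub>m p * X ^\<^sub>m q * X" by (rule assoc_d[symmetric]) (use Suc.prems in auto)
  also have "\<dots> = X ^\<^sub>m (p + Suc q)" using Suc by simp
  finally show ?case .
qed

lemma hterm_one:
  assumes XC: "X \<in> carrier_mat d d" and QC: "Q \<in> carrier_mat d d"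
  shows "hterm d (1\<^sub>m d) Q X k = of_nat k * mtrace (Q * X ^\<^sub>m (k - 1))"
proof -
  have "hterm d (1\<^sub>m d) Q X k = (\<Sum>p<k. mtrace (Q * X ^\<^sub>m (k - 1)))"
    unfolding hterm_def
  proof (rule sum.cong[OF refl])
    fix p assume p: "p \<in> {..<k}"
    have "mtrace (1\<^sub>m d * (X ^\<^sub>m p * (Q * X ^\<^sub>m (k - Suc p)))) = mtrace (X ^\<^sub>m p * (Q * X ^\<^sub>m (k - Suc p)))"
      using XC QC by simp
    also have "\<dots> = mtrace ((Q * X ^\<^sub>m (k - Suc p)) * X ^\<^sub>m p)"
      using XC QC by (intro mtrace_comm[of _ d d]) auto
    also have "\<dots> = mtrace (Q * (X ^\<^sub>m (k - Suc p) * X ^\<^sub>m p))"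
      using XC QC by (simp add: assoc_d[where n=d])
    also have "\<dots> = mtrace (Q * X ^\<^sub>m (k - 1))"
      using p XC by (simp add: pow_add_mat)
    finally show "mtrace (1\<^sub>m d * (X ^\<^sub>m p * (Q * X ^\<^sub>m (k - Suc p)))) = mtrace (Q * X ^\<^sub>m (k - 1))" .
  qed
  then show ?thesis by simp
qed

lemma hterm_sym:
  assumes XC: "X \<in> carrier_mat d d" and QC: "Q \<in> carrier_mat d d" and PC: "P \<in> carrier_mat d d"
  shows "hterm d P Q X k = hterm d Q P X k"
proof -
  define g where "g = (\<lambda>p. mtrace (Q * (X ^\<^sub>m p * (P * X ^\<^sub>m (k - Suc p)))))"
  have "hterm d P Q X k = (\<Sum>p<k. g (k - Suc p))"
    unfolding hterm_def
  proof (rule sum.cong[OF refl])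
    fix p assume p: "p \<in> {..<k}"
    then have kk: "k - Suc (k - Suc p) = p" by auto
    have "mtrace (P * (X ^\<^sub>m p * (Q * X ^\<^sub>m (k - Suc p)))) = mtrace ((P * X ^\<^sub>m p) * (Q * X ^\<^sub>m (k - Suc p)))"
      using XC QC PC by (simp add: assoc_d[where n=d])
    also have "\<dots> = mtrace ((Q * X ^\<^sub>m (k - Suc p)) * (P * X ^\<^sub>m p))"
      using XC QC PC by (intro mtrace_comm[of _ d d]) auto
    also have "\<dots> = g (k - Suc p)"
      unfolding g_def kk using XC QC PC by (simp add: assoc_d[where n=d])
    finally show "mtrace (P * (X ^\<^sub>m p * (Q * X ^\<^sub>m (k - Suc p)))) = g (k - Suc p)" .
  qed
  also have "\<dots> = (\<Sum>p<k. g p)" by (rule sum.nat_diff_reindex)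
  finally show ?thesis unfolding g_def hterm_def .
qed

lemma trace_lincomb_left:
  assumes "B \<in> carrier_mat d d" "\<forall>l<N. L l \<in> carrier_mat d d"
  shows "mtrace (lincomb d N r L * B) = (\<Sum>l<N. r l * mtrace (L l * B))"
proof -
  have "mtrace (1\<^sub>m d * lincomb d N r L * B) = (\<Sum>l<N. r l * mtrace (1\<^sub>m d * L l * B))"
    using assms by (intro trace_lincomb) auto
  moreover have "(\<Sum>l<N. r l * mtrace (1\<^sub>m d * L l * B)) = (\<Sum>l<N. r l * mtrace (L l * B))"
    using assms by (intro sum.cong refl) (simp add: left_one_d)
  ultimately show ?thesis using assms by (simp add: left_one_d)
qed

lemma hterm_lincomb:
  assumes XC: "X \<in> carrier_mat d d" and PC: "P \<in> carrier_mat d d" and LC: "\<forall>l<N. L l \<in> carrier_mat d d"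
  shows "hterm d P (lincomb d N r L) X k = (\<Sum>l<N. r l * hterm d P (L l) X k)"
proof -
  have "hterm d P (lincomb d N r L) X k = (\<Sum>p<k. \<Sum>l<N. r l * mtrace (P * (X ^\<^sub>m p * (L l * X ^\<^sub>m (k - Suc p)))))"
    unfolding hterm_def
  proof (rule sum.cong[OF refl])
    fix p
    have "mtrace (P * (X ^\<^sub>m p * (lincomb d N r L * X ^\<^sub>m (k - Suc p)))) =
          mtrace ((P * X ^\<^sub>m p) * lincomb d N r L * X ^\<^sub>m (k - Suc p))"
      using XC PC by (simp add: assoc_d[where n=d])
    also have "\<dots> = (\<Sum>l<N. r l * mtrace ((P * X ^\<^sub>m p) * L l * X ^\<^sub>m (k - Suc p)))"
      using XC PC LC by (intro trace_lincomb) auto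
    also have "\<dots> = (\<Sum>l<N. r l * mtrace (P * (X ^\<^sub>m p * (L l * X ^\<^sub>m (k - Suc p)))))"
      using XC PC LC by (intro sum.cong refl) (simp add: assoc_d[where n=d])
    finally show "mtrace (P * (X ^\<^sub>m p * (lincomb d N r L * X ^\<^sub>m (k - Suc p)))) =
       (\<Sum>l<N. r l * mtrace (P * (X ^\<^sub>m p * (L l * X ^\<^sub>m (k - Suc p)))))" .
  qed
  also have "\<dots> = (\<Sum>l<N. r l * hterm d P (L l) X k)"
    unfolding hterm_def by (simp add: sum_distrib_left sum.swap[where B="{..<N}"])
  finally show ?thesis .
qed

lemma hterm_smult:
  assumes XC: "X \<in> carrier_mat d d" and PC: "P \<in> carrier_mat d d" and QC: "Q \<in> carrier_mat d d"
  shows "hterm d P (c \<cdot>\<^sub>m Q) X k = c * hterm d P Q X k"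
  unfolding hterm_def sum_distrib_left
proof (rule sum.cong[OF refl])
  fix p
  have "mtrace (P * (X ^\<^sub>m p * (c \<cdot>\<^sub>m Q * X ^\<^sub>m (k - Suc p)))) =
          mtrace ((P * X ^\<^sub>m p) * (c \<cdot>\<^sub>m Q) * X ^\<^sub>m (k - Suc p))"
    using XC PC QC by (simp add: assoc_d[where n=d])
  also have "\<dots> = c * mtrace ((P * X ^\<^sub>m p) * Q * X ^\<^sub>m (k - Suc p))"
    using XC PC QC by (intro trace_smult_mid) auto
  also have "\<dots> = c * mtrace (P * (X ^\<^sub>m p * (Q * X ^\<^sub>m (k - Suc p))))"
    using XC PC QC by (simp add: assoc_d[where n=d])
  finally show "mtrace (P * (X ^\<^sub>m p * (c \<cdot>\<^sub>m Q * X ^\<^sub>m (k - Suc p)))) =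
      c * mtrace (P * (X ^\<^sub>m p * (Q * X ^\<^sub>m (k - Suc p))))" .
qed

definition hh :: "nat \<Rightarrow> complex mat \<Rightarrow> complex mat \<Rightarrow> complex mat \<Rightarrow> complex" where
  "hh d P Q X = (\<Sum>k. hterm d P Q X k / of_nat (fact k))"

lemma hterm_summable:
  assumes XC: "X \<in> carrier_mat d d" and PC: "P \<in> carrier_mat d d" and QC: "Q \<in> carrier_mat d d"
  shows "summable (\<lambda>k. hterm d P Q X k / of_nat (fact k))"
proof (rule summable_comparison_test[OF _ summable_kbound[of "mnorm d P * mnorm d Q * (real d + 1)^2" "mnorm d X"]])
  show "\<exists>N. \<forall>n\<ge>N. norm (hterm d P Q X n / of_nat (fact n)) \<le>
       mnorm d P * mnorm d Q * (real d + 1)\<^sup>2 * (real n * mnorm d X ^ (n - 1) / fact n)"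
    using hterm_bound[OF PC XC QC order_refl]
    by (intro exI[of _ 0] allI impI) (simp add: norm_divide divide_right_mono)
qed

lemma hh_sym:
  assumes "X \<in> carrier_mat d d" "Q \<in> carrier_mat d d" "P \<in> carrier_mat d d"
  shows "hh d P Q X = hh d Q P X"
  unfolding hh_def using hterm_sym[OF assms] by simp

lemma hh_smult:
  assumes XC: "X \<in> carrier_mat d d" and PC: "P \<in> carrier_mat d d" and QC: "Q \<in> carrier_mat d d"
  shows "hh d P (c \<cdot>\<^sub>m Q) X = c * hh d P Q X"
  unfolding hh_def hterm_smult[OF assms]
  using suminf_mult[OF hterm_summable[OF assms], of c] by (simp add: mult_ac times_divide_eq_right)

lemma hh_lincomb:
  assumes XC: "X \<in> carrier_mat d d" and PC: "P \<in> carrier_mat d d" and LC: "\<forall>l<N. L l \<in> carrier_mat d d"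
  shows "hh d P (lincomb d N r L) X = (\<Sum>l<N. r l * hh d P (L l) X)"
proof -
  have "hh d P (lincomb d N r L) X = (\<Sum>k. \<Sum>l<N. r l * (hterm d P (L l) X k / of_nat (fact k)))"
    unfolding hh_def hterm_lincomb[OF assms] by (simp add: sum_divide_distrib)
  also have "\<dots> = (\<Sum>l<N. \<Sum>k. r l * (hterm d P (L l) X k / of_nat (fact k)))"
    using LC XC PC by (intro suminf_sum summable_mult hterm_summable) auto
  also have "\<dots> = (\<Sum>l<N. r l * hh d P (L l) X)"
    unfolding hh_def
  proof (rule sum.cong[OF refl])
    fix l assume "l \<in> {..<N}"
    then have "summable (\<lambda>k. hterm d P (L l) X k / of_nat (fact k))"
      using LC XC PC by (intro hterm_summable) auto
    then show "(\<Sum>k. r l * (hterm d P (L l) X k / of_nat (fact k))) = r l * (\<Sum>k. hterm d P (L l) X k / of_nat (fact k))"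
      by (rule suminf_mult)
  qed
  finally show ?thesis .
qed

lemma hh_one:
  assumes XC: "X \<in> carrier_mat d d" and QC: "Q \<in> carrier_mat d d"
  shows "hh d (1\<^sub>m d) Q X = mtrace (Q * mexp d X)"
proof -
  have s: "(\<lambda>k. mtrace (Q * X ^\<^sub>m k) / of_nat (fact k)) sums mtrace (Q * mexp d X)"
    by (rule trace_mexp_sums[OF XC QC])
  have e: "hterm d (1\<^sub>m d) Q X (Suc k) / of_nat (fact (Suc k)) = mtrace (Q * X ^\<^sub>m k) / of_nat (fact k)" for k
  proof -
    have f: "of_nat (fact (Suc k)) = (of_nat (Suc k) * of_nat (fact k) :: complex)"
      by (simp only: fact_Suc of_nat_mult of_nat_id)
    have nz: "(of_nat (Suc k) :: complex) \<noteq> 0" by (simp only: of_nat_eq_0_iff)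
    show ?thesis
      unfolding hterm_one[OF XC QC] f using mult_divide_mult_cancel_left[OF nz] by simp
  qed
  have s': "(\<lambda>k. hterm d (1\<^sub>m d) Q X (Suc k) / of_nat (fact (Suc k))) sums mtrace (Q * mexp d X)"
    using s by (simp only: e)
  have h0: "hterm d (1\<^sub>m d) Q X 0 / of_nat (fact 0) = 0" by (simp add: hterm_def)
  have "(\<lambda>k. hterm d (1\<^sub>m d) Q X k / of_nat (fact k)) sums (mtrace (Q * mexp d X) + 0)"
    using iffD1[OF sums_Suc_iff[of "\<lambda>k. hterm d (1\<^sub>m d) Q X k / of_nat (fact k)"] s'] unfolding h0 .
  then show ?thesis unfolding hh_def by (simp add: sums_iff)
qed


definition Am :: "nat \<Rightarrow> nat \<Rightarrow> (nat \<Rightarrow> complex mat) \<Rightarrow> complex \<Rightarrow> (nat \<Rightarrow> real) \<Rightarrow> complex mat" where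
  "Am d N L cc r = cc \<cdot>\<^sub>m lincomb d N (\<lambda>j. complex_of_real (r j)) L"

lemma Am_carrier[simp]: "Am d N L cc r \<in> carrier_mat d d"
  by (simp add: Am_def)

lemma Am_entry: "a < d \<Longrightarrow> c < d \<Longrightarrow> Am d N L cc r $$ (a,c) = cc * (\<Sum>l<N. complex_of_real (r l) * L l $$ (a,c))"
  by (simp add: Am_def lincomb_entry)

lemma mnorm_Am:
  assumes LC: "\<forall>l<N. L l \<in> carrier_mat d d"
  shows "mnorm d (Am d N L cc r) \<le> cmod cc * (\<Sum>l<N. \<bar>r l\<bar> * mnorm d (L l))"
proof -
  have "mnorm d (Am d N L cc r) = cmod cc * mnorm d (lincomb d N (\<lambda>j. complex_of_real (r j)) L)"
    unfolding Am_def by (rule mnorm_smult) simp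
  also have "\<dots> \<le> cmod cc * (\<Sum>l<N. \<bar>r l\<bar> * mnorm d (L l))"
    using mnorm_lincomb[OF LC, of "\<lambda>j. complex_of_real (r j)"] by (intro mult_left_mono) auto
  finally show ?thesis .
qed

lemma sum_upd:
  fixes r :: "nat \<Rightarrow> real" and N :: nat
  assumes "j < N"
  shows "(\<Sum>l<N. complex_of_real ((r(j := s)) l) * f l) =
         (\<Sum>l<N. complex_of_real (r l) * f l) + complex_of_real (s - r j) * f j"
proof -
  have A: "(\<Sum>l<N. complex_of_real ((r(j := s)) l) * f l) = complex_of_real s * f j + (\<Sum>l\<in>{..<N}-{j}. complex_of_real (r l) * f l)"
    using assms by (subst sum.remove[of _ j]) (auto intro!: sum.cong)
  have B: "(\<Sum>l<N. complex_of_real (r l) * f l) = complex_of_real (r j) * f j + (\<Sum>l\<in>{..<N}-{j}. complex_of_real (r l) * f l)"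
    using assms by (subst sum.remove[of _ j]) auto
  show ?thesis unfolding A B by (simp add: algebra_simps)
qed

lemma coord_deriv:
  assumes LC: "\<forall>l<N. L l \<in> carrier_mat d d" and j: "j < N" and PC: "P \<in> carrier_mat d d"
  shows "((\<lambda>s. mtrace (P * mexp d (Am d N L cc (r(j := s))))) has_vector_derivative
           (cc * hh d P (L j) (Am d N L cc r))) (at (r j))"
proof -
  define S where "S = {r j - 1 <..< r j + 1}"
  define X where "X = (\<lambda>s. Am d N L cc (r(j := s)))"
  define X' where "X' = (\<lambda>s::real. cc \<cdot>\<^sub>m L j)"
  have LjC: "L j \<in> carrier_mat d d" using LC j by auto
  have XC: "\<And>s. X s \<in> carrier_mat d d" by (simp add: X_def)
  have X'C: "\<And>s. X' s \<in> carrier_mat d d" using LjC by (simp add: X'_def)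
  have D: "mhd d X (X' s) s S" for s
    unfolding mhd_def
  proof (intro allI impI)
    fix a c assume a: "a < d" and c: "c < d"
    have eq: "(\<lambda>s. X s $$ (a,c)) = (\<lambda>s. cc * (\<Sum>l<N. complex_of_real (r l) * L l $$ (a,c)) +
                 cc * (complex_of_real (s - r j) * L j $$ (a,c)))"
      by (rule ext) (simp only: X_def Am_entry[OF a c] sum_upd[OF j] distrib_left)
    have "((\<lambda>s. cc * (\<Sum>l<N. complex_of_real (r l) * L l $$ (a,c)) +
                 cc * (complex_of_real (s - r j) * L j $$ (a,c))) has_vector_derivative
            0 + cc * (complex_of_real 1 * L j $$ (a,c))) (at s within S)"
      by (intro has_vector_derivative_add has_vector_derivative_const has_vector_derivative_mult_right
          has_vector_derivative_mult_left has_vector_derivative_of_real derivative_eq_intros) auto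
    then show "((\<lambda>s. X s $$ (a,c)) has_vector_derivative X' s $$ (a,c)) (at s within S)"
      unfolding eq X'_def using a c LjC by simp
  qed
  define R where "R = cmod cc * (\<Sum>l<N. (\<bar>r l\<bar> + \<bar>r j\<bar> + 1) * mnorm d (L l))"
  have BX: "mnorm d (X s) \<le> R" if "s \<in> S" for s
  proof -
    have "mnorm d (X s) \<le> cmod cc * (\<Sum>l<N. \<bar>(r(j := s)) l\<bar> * mnorm d (L l))"
      unfolding X_def by (rule mnorm_Am[OF LC])
    also have "\<dots> \<le> R" unfolding R_def
    proof (intro mult_left_mono sum_mono mult_right_mono mnorm_nonneg norm_ge_zero)
      fix l assume "l \<in> {..<N}"
      show "\<bar>(r(j := s)) l\<bar> \<le> \<bar>r l\<bar> + \<bar>r j\<bar> + 1"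
        using that unfolding S_def by auto
    qed
    finally show ?thesis .
  qed
  have BX': "mnorm d (X' s) \<le> mnorm d (cc \<cdot>\<^sub>m L j)" for s by (simp add: X'_def)
  have cvx: "convex S" unfolding S_def by (rule convex_real_interval)
  have rS: "r j \<in> S" unfolding S_def by auto
  have "((\<lambda>s. mtrace (P * mexp d (X s))) has_vector_derivative
          (\<Sum>k. hterm d P (X' (r j)) (X (r j)) k / of_nat (fact k))) (at (r j) within S)"
    by (rule series_deriv[OF cvx rS XC X'C PC D BX BX'])
  moreover have "X (r j) = Am d N L cc r" by (simp add: X_def)
  moreover have "(\<Sum>k. hterm d P (X' (r j)) (Am d N L cc r) k / of_nat (fact k)) = cc * hh d P (L j) (Am d N L cc r)"
    using hh_smult[OF Am_carrier PC LjC] unfolding hh_def X'_def by simp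
  moreover have "at (r j) within S = at (r j)"
    unfolding S_def by (rule at_within_open) auto
  ultimately show ?thesis unfolding X_def by simp
qed

lemma cont_bound:
  fixes f :: "real \<Rightarrow> real"
  assumes "continuous_on {a..b} f"
  shows "\<exists>B. \<forall>t\<in>{a..b}. f t \<le> B"
proof -
  have "compact (f ` {a..b})" by (rule compact_continuous_image[OF assms compact_Icc])
  then have "bounded (f ` {a..b})" by (rule compact_imp_bounded)
  then obtain B where "\<forall>x\<in>f ` {a..b}. norm x \<le> B" by (auto simp: bounded_iff)
  then have "\<forall>t\<in>{a..b}. f t \<le> B"
  proof (intro ballI)
    fix t assume t: "t \<in> {a..b}"
    assume H: "\<forall>x\<in>f ` {a..b}. norm x \<le> B"
    have "norm (f t) \<le> B" using H t by blast
    then show "f t \<le> B" by simp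
  qed
  then show ?thesis by blast
qed

lemma curve_deriv:
  assumes LC: "\<forall>l<N. L l \<in> carrier_mat d d" and PC: "P \<in> carrier_mat d d"
    and n_deriv: "\<forall>j < N. \<forall>t \<in> {t0..T}. ((\<lambda>s. n s j) has_real_derivative dn t j) (at t within {t0..T})"
    and dn_cont: "\<forall>j < N. continuous_on {t0..T} (\<lambda>t. dn t j)"
    and t: "t \<in> {t0..T}"
  shows "((\<lambda>s. mtrace (P * mexp d (Am d N L cc (n s)))) has_vector_derivative
           (cc * (\<Sum>l<N. complex_of_real (dn t l) * hh d P (L l) (Am d N L cc (n t))))) (at t within {t0..T})"
proof -
  define S where "S = {t0..T}"
  define X where "X = (\<lambda>s. Am d N L cc (n s))"
  define X' where "X' = (\<lambda>s. cc \<cdot>\<^sub>m lincomb d N (\<lambda>l. complex_of_real (dn s l)) L)"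
  have XC: "\<And>s. X s \<in> carrier_mat d d" by (simp add: X_def)
  have X'C: "\<And>s. X' s \<in> carrier_mat d d" by (simp add: X'_def)
  have D: "mhd d X (X' s) s S" if "s \<in> S" for s
    unfolding mhd_def
  proof (intro allI impI)
    fix a c assume a: "a < d" and c: "c < d"
    have eq: "(\<lambda>s. X s $$ (a,c)) = (\<lambda>s. cc * (\<Sum>l<N. complex_of_real (n s l) * L l $$ (a,c)))"
      by (rule ext) (simp add: X_def Am_entry[OF a c])
    have "((\<lambda>s. cc * (\<Sum>l<N. complex_of_real (n s l) * L l $$ (a,c))) has_vector_derivative
            cc * (\<Sum>l<N. complex_of_real (dn s l) * L l $$ (a,c))) (at s within S)"
      using n_deriv that unfolding S_def
      by (intro has_vector_derivative_mult_right has_vector_derivative_sum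
          has_vector_derivative_mult_left has_vector_derivative_of_real) auto
    then show "((\<lambda>s. X s $$ (a,c)) has_vector_derivative X' s $$ (a,c)) (at s within S)"
      unfolding eq X'_def using a c by (simp add: lincomb_entry)
  qed
  have ncont: "continuous_on S (\<lambda>s. n s l)" if "l < N" for l
    unfolding continuous_on_eq_continuous_within S_def
    using n_deriv that by (auto intro: DERIV_continuous)
  have "continuous_on S (\<lambda>s. cmod cc * (\<Sum>l<N. \<bar>n s l\<bar> * mnorm d (L l)))"
    using ncont by (intro continuous_intros) auto
  then obtain R where R: "\<forall>s\<in>S. cmod cc * (\<Sum>l<N. \<bar>n s l\<bar> * mnorm d (L l)) \<le> R"
    unfolding S_def using cont_bound by blast
  have BX: "mnorm d (X s) \<le> R" if "s \<in> S" for s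
    unfolding X_def using mnorm_Am[OF LC, of cc "n s"] R that by auto
  have "continuous_on S (\<lambda>s. cmod cc * (\<Sum>l<N. \<bar>dn s l\<bar> * mnorm d (L l)))"
    using dn_cont unfolding S_def by (intro continuous_intros) auto
  then obtain R' where R': "\<forall>s\<in>S. cmod cc * (\<Sum>l<N. \<bar>dn s l\<bar> * mnorm d (L l)) \<le> R'"
    unfolding S_def using cont_bound by blast
  have BX': "mnorm d (X' s) \<le> R'" if "s \<in> S" for s
    using mnorm_Am[OF LC, of cc "dn s"] R' that unfolding X'_def Am_def by auto
  have cvx: "convex S" unfolding S_def by (rule convex_real_interval)
  have tS: "t \<in> S" using t unfolding S_def .
  have "((\<lambda>s. mtrace (P * mexp d (X s))) has_vector_derivative
          (\<Sum>k. hterm d P (X' t) (X t) k / of_nat (fact k))) (at t within S)"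
    by (rule series_deriv[OF cvx tS XC X'C PC D BX BX'])
  moreover have "(\<Sum>k. hterm d P (X' t) (X t) k / of_nat (fact k)) =
      cc * (\<Sum>l<N. complex_of_real (dn t l) * hh d P (L l) (Am d N L cc (n t)))"
  proof -
    have "(\<Sum>k. hterm d P (X' t) (X t) k / of_nat (fact k)) = hh d P (X' t) (X t)"
      by (simp add: hh_def)
    also have "\<dots> = cc * hh d P (lincomb d N (\<lambda>l. complex_of_real (dn t l)) L) (X t)"
      unfolding X'_def by (rule hh_smult[OF XC PC lincomb_carrier])
    also have "\<dots> = cc * (\<Sum>l<N. complex_of_real (dn t l) * hh d P (L l) (Am d N L cc (n t)))"
      unfolding X_def by (simp add: hh_lincomb[OF Am_carrier PC LC])
    finally show ?thesis .
  qed
  ultimately show ?thesis unfolding X_def S_def by simp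
qed


lemma re_cnj_le: "Re a * Re b + Im a * Im b \<le> cmod a * cmod b"
proof -
  have "Re a * Re b + Im a * Im b = Re (cnj a * b)" by simp
  also have "\<dots> \<le> cmod (cnj a * b)" by (rule complex_Re_le_cmod)
  also have "\<dots> = cmod a * cmod b" by (simp add: norm_mult)
  finally show ?thesis .
qed

lemma ode_unique:
  fixes y y' :: "'i \<Rightarrow> real \<Rightarrow> complex"
  assumes fin: "finite I" and C0: "0 \<le> C"
    and der: "\<And>i t. i \<in> I \<Longrightarrow> t \<in> {t0..T} \<Longrightarrow> (y i has_vector_derivative y' i t) (at t within {t0..T})"
    and bnd: "\<And>i t. i \<in> I \<Longrightarrow> t \<in> {t0..T} \<Longrightarrow> cmod (y' i t) \<le> C * (\<Sum>k\<in>I. cmod (y k t))"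
    and init: "\<And>i. i \<in> I \<Longrightarrow> y i t0 = 0"
    and i: "i \<in> I" and t: "t \<in> {t0..T}"
  shows "y i t = 0"
proof -
  define S where "S = {t0..T}"
  define K where "K = 2 * C * real (card I)"
  define \<psi> where "\<psi> = (\<lambda>s. \<Sum>k\<in>I. Re (y k s) * Re (y k s) + Im (y k s) * Im (y k s))"
  define \<psi>' where "\<psi>' = (\<lambda>s. \<Sum>k\<in>I. 2 * (Re (y k s) * Re (y' k s) + Im (y k s) * Im (y' k s)))"
  define chi where "chi = (\<lambda>s. exp (- K * s) * \<psi> s)"
  have dre: "((\<lambda>s. Re (y k s)) has_vector_derivative Re (y' k s)) (at s within S)"
    and dim: "((\<lambda>s. Im (y k s)) has_vector_derivative Im (y' k s)) (at s within S)"
    if "k \<in> I" "s \<in> S" for k s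
    using bounded_linear.has_vector_derivative[OF bounded_linear_Re der[OF that[unfolded S_def]]]
          bounded_linear.has_vector_derivative[OF bounded_linear_Im der[OF that[unfolded S_def]]]
    unfolding S_def by auto
  have d\<psi>: "(\<psi> has_vector_derivative \<psi>' s) (at s within S)" if "s \<in> S" for s
  proof -
    have "((\<lambda>s. \<Sum>k\<in>I. Re (y k s) * Re (y k s) + Im (y k s) * Im (y k s)) has_vector_derivative
       (\<Sum>k\<in>I. (Re (y k s) * Re (y' k s) + Re (y' k s) * Re (y k s)) + (Im (y k s) * Im (y' k s) + Im (y' k s) * Im (y k s))))
       (at s within S)"
      using dre dim that by (intro has_vector_derivative_sum has_vector_derivative_add has_vector_derivative_mult) auto
    then show ?thesis unfolding \<psi>_def \<psi>'_def by (simp add: algebra_simps)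
  qed
  have \<psi>_nonneg: "0 \<le> \<psi> s" for s unfolding \<psi>_def by (intro sum_nonneg) auto
  have \<psi>_cmod: "\<psi> s = (\<Sum>k\<in>I. cmod (y k s) ^ 2)" for s
    unfolding \<psi>_def by (intro sum.cong refl) (simp only: cmod_power2, simp only: power2_eq_square)
  have \<psi>'_le: "\<psi>' s \<le> K * \<psi> s" if "s \<in> S" for s
  proof -
    have "\<psi>' s \<le> (\<Sum>k\<in>I. 2 * (cmod (y k s) * cmod (y' k s)))"
      unfolding \<psi>'_def by (intro sum_mono mult_left_mono re_cnj_le) auto
    also have "\<dots> \<le> (\<Sum>k\<in>I. 2 * (cmod (y k s) * (C * (\<Sum>m\<in>I. cmod (y m s)))))"
      using bnd that unfolding S_def by (intro sum_mono mult_left_mono) auto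
    also have "\<dots> = C * (\<Sum>k\<in>I. \<Sum>m\<in>I. 2 * (cmod (y k s) * cmod (y m s)))"
      by (simp add: sum_distrib_left sum_distrib_right mult_ac)
    also have "\<dots> \<le> C * (\<Sum>k\<in>I. \<Sum>m\<in>I. cmod (y k s) ^ 2 + cmod (y m s) ^ 2)"
    proof (intro mult_left_mono C0 sum_mono)
      fix k m
      show "2 * (cmod (y k s) * cmod (y m s)) \<le> cmod (y k s) ^ 2 + cmod (y m s) ^ 2"
        using sum_squares_bound[of "cmod (y k s)" "cmod (y m s)"] by (simp add: mult_ac)
    qed
    also have "\<dots> = C * (2 * real (card I) * \<psi> s)"
      unfolding \<psi>_cmod by (simp add: sum.distrib sum_distrib_left algebra_simps)
    also have "\<dots> = K * \<psi> s" unfolding K_def by (simp add: mult_ac)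
    finally show ?thesis .
  qed
  have dchi: "(chi has_vector_derivative exp (- K * s) * (\<psi>' s - K * \<psi> s)) (at s within S)" if "s \<in> S" for s
  proof -
    have e: "((\<lambda>s. exp (- K * s)) has_vector_derivative exp (- K * s) * (- K)) (at s within S)"
      unfolding has_real_derivative_iff_has_vector_derivative[symmetric]
      by (auto intro!: derivative_eq_intros)
    have "(chi has_vector_derivative exp (- K * s) * \<psi>' s + exp (- K * s) * (- K) * \<psi> s) (at s within S)"
      unfolding chi_def by (rule has_vector_derivative_mult[OF e d\<psi>[OF that]])
    then show ?thesis by (simp add: algebra_simps)
  qed
  have tT: "t0 \<le> t" "t \<le> T" using t by auto
  have cont: "continuous_on {t0..t} chi"
  proof -
    have "continuous_on S chi"
      using dchi unfolding continuous_on_eq_continuous_within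
      by (meson has_vector_derivative_continuous)
    then show ?thesis by (rule continuous_on_subset) (use tT in \<open>auto simp: S_def\<close>)
  qed
  have "chi t \<le> chi t0"
  proof (rule DERIV_nonpos_imp_decreasing_open[OF tT(1) _ cont])
    fix x assume x: "t0 < x" "x < t"
    then have xi: "x \<in> interior S" unfolding S_def using tT by auto
    have "(chi has_vector_derivative exp (- K * x) * (\<psi>' x - K * \<psi> x)) (at x)"
      using dchi[of x] xi interior_subset at_within_interior[OF xi] by auto
    moreover have "exp (- K * x) * (\<psi>' x - K * \<psi> x) \<le> 0"
      using \<psi>'_le[of x] xi interior_subset by (intro mult_nonneg_nonpos) auto
    ultimately show "\<exists>y. (chi has_real_derivative y) (at x) \<and> y \<le> 0"
      unfolding has_real_derivative_iff_has_vector_derivative by blast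
  qed
  moreover have "\<psi> t0 = 0" unfolding \<psi>_def using init by simp
  ultimately have "chi t \<le> 0" unfolding chi_def by simp
  then have "\<psi> t \<le> 0" unfolding chi_def by (simp add: mult_le_0_iff)
  then have "\<psi> t = 0" using \<psi>_nonneg[of t] by simp
  then have "(\<Sum>k\<in>I. cmod (y k t) ^ 2) = 0" by (simp add: \<psi>_cmod)
  then have "cmod (y i t) ^ 2 = 0" using sum_nonneg_eq_0_iff[OF fin, of "\<lambda>k. cmod (y k t) ^ 2"] i by simp
  then show ?thesis by simp
qed


lemma W_deriv:
  fixes M :: "real \<Rightarrow> complex mat" and U :: "real \<Rightarrow> complex mat" and b0 :: "real \<Rightarrow> real"
    and B :: "real \<Rightarrow> complex mat" and sq :: complex
  assumes b0_cont: "continuous_on {t0..T} b0"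
    and BC: "\<And>s. B s \<in> carrier_mat d d"
    and U_carrier: "\<forall>t \<in> {t0..T}. U t \<in> carrier_mat d d"
    and U_ode: "\<forall>t \<in> {t0..T}. \<forall>a < d. \<forall>c < d.
        ((\<lambda>s. U s $$ (a,c)) has_vector_derivative
           (- \<i> * ((complex_of_real (b0 t) \<cdot>\<^sub>m 1\<^sub>m d + sq \<cdot>\<^sub>m B t) * U t) $$ (a,c)))
         (at t within {t0..T})"
    and U_formula: "\<forall>t \<in> {t0..T}. U t = exp (- \<i> * complex_of_real (integral {t0..t} b0)) \<cdot>\<^sub>m mexp d (M t)"
    and t: "t \<in> {t0..T}"
  shows "mhd d (\<lambda>s. mexp d (M s)) ((- \<i> * sq) \<cdot>\<^sub>m (B t * mexp d (M t))) t {t0..T}"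
  unfolding mhd_def
proof (intro allI impI)
  fix a c assume a: "a < d" and c: "c < d"
  define S where "S = {t0..T}"
  define E where "E = (\<lambda>s. exp (\<i> * complex_of_real (integral {t0..s} b0)))"
  have W_eq: "mexp d (M s) $$ (k,c') = E s * U s $$ (k,c')" if "s \<in> S" "k < d" "c' < d" for s k c'
  proof -
    have "U s $$ (k,c') = exp (- \<i> * complex_of_real (integral {t0..s} b0)) * mexp d (M s) $$ (k,c')"
      using U_formula that unfolding S_def by (simp add: mexp_def)
    then have "E s * U s $$ (k,c') = (exp (\<i> * complex_of_real (integral {t0..s} b0)) * exp (- \<i> * complex_of_real (integral {t0..s} b0))) * mexp d (M s) $$ (k,c')"
      unfolding E_def by (simp add: mult_ac)
    also have "\<dots> = mexp d (M s) $$ (k,c')"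
      by (simp add: exp_add[symmetric])
    finally show ?thesis by simp
  qed
  have tS: "t \<in> S" using t unfolding S_def .
  have dE: "(E has_vector_derivative (\<i> * complex_of_real (b0 t)) * E t) (at t within S)"
  proof -
    have f: "((\<lambda>s. \<i> * complex_of_real (integral {t0..s} b0)) has_vector_derivative \<i> * complex_of_real (b0 t)) (at t within S)"
      unfolding S_def
      by (intro has_vector_derivative_mult_right has_vector_derivative_of_real integral_has_real_derivative b0_cont t)
    have "((exp \<circ> (\<lambda>s. \<i> * complex_of_real (integral {t0..s} b0))) has_vector_derivative
            (\<i> * complex_of_real (b0 t)) * exp (\<i> * complex_of_real (integral {t0..t} b0))) (at t within S)"
      by (rule field_vector_diff_chain_within[OF f has_field_derivative_at_within[OF DERIV_exp]])
    then show ?thesis unfolding E_def o_def .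
  qed
  define Bt where "Bt = B t"
  define Ut where "Ut = U t"
  have UtC: "Ut \<in> carrier_mat d d" using U_carrier t unfolding Ut_def by auto
  have BtC: "Bt \<in> carrier_mat d d" using BC unfolding Bt_def by auto
  have dU: "((\<lambda>s. U s $$ (a,c)) has_vector_derivative
           (- \<i> * (complex_of_real (b0 t) * Ut $$ (a,c) + sq * (\<Sum>k<d. Bt $$ (a,k) * Ut $$ (k,c))))) (at t within S)"
  proof -
    have "((complex_of_real (b0 t) \<cdot>\<^sub>m 1\<^sub>m d + sq \<cdot>\<^sub>m Bt) * Ut) $$ (a,c)
          = (\<Sum>k<d. (complex_of_real (b0 t) \<cdot>\<^sub>m 1\<^sub>m d + sq \<cdot>\<^sub>m Bt) $$ (a,k) * Ut $$ (k,c))"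
      using BtC UtC a c by (intro mult_entry) auto
    also have "\<dots> = (\<Sum>k<d. (if a = k then complex_of_real (b0 t) * Ut $$ (k,c) else 0) + sq * (Bt $$ (a,k) * Ut $$ (k,c)))"
      using BtC a by (intro sum.cong refl) (auto simp: algebra_simps)
    also have "\<dots> = complex_of_real (b0 t) * Ut $$ (a,c) + sq * (\<Sum>k<d. Bt $$ (a,k) * Ut $$ (k,c))"
      using a by (simp add: sum.distrib sum_distrib_left)
    finally have eq: "((complex_of_real (b0 t) \<cdot>\<^sub>m 1\<^sub>m d + sq \<cdot>\<^sub>m Bt) * Ut) $$ (a,c) =
        complex_of_real (b0 t) * Ut $$ (a,c) + sq * (\<Sum>k<d. Bt $$ (a,k) * Ut $$ (k,c))" .
    have "((\<lambda>s. U s $$ (a,c)) has_vector_derivative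
           (- \<i> * ((complex_of_real (b0 t) \<cdot>\<^sub>m 1\<^sub>m d + sq \<cdot>\<^sub>m Bt) * Ut) $$ (a,c))) (at t within S)"
      using U_ode t a c unfolding S_def Bt_def Ut_def by auto
    then show ?thesis unfolding eq .
  qed
  have "((\<lambda>s. E s * U s $$ (a,c)) has_vector_derivative
          E t * (- \<i> * (complex_of_real (b0 t) * Ut $$ (a,c) + sq * (\<Sum>k<d. Bt $$ (a,k) * Ut $$ (k,c))))
          + (\<i> * complex_of_real (b0 t)) * E t * Ut $$ (a,c)) (at t within S)"
    using has_vector_derivative_mult[OF dE dU] unfolding Ut_def by simp
  moreover have "E t * (- \<i> * (complex_of_real (b0 t) * Ut $$ (a,c) + sq * (\<Sum>k<d. Bt $$ (a,k) * Ut $$ (k,c))))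
          + (\<i> * complex_of_real (b0 t)) * E t * Ut $$ (a,c)
        = ((- \<i> * sq) \<cdot>\<^sub>m (B t * mexp d (M t))) $$ (a,c)"
  proof -
    have "((- \<i> * sq) \<cdot>\<^sub>m (B t * mexp d (M t))) $$ (a,c) = (- \<i> * sq) * (Bt * mexp d (M t)) $$ (a,c)"
      using a c BtC mexp_carrier[of d "M t"] unfolding Bt_def by (subst index_smult_mat) auto
    also have "(Bt * mexp d (M t)) $$ (a,c) = (\<Sum>k<d. Bt $$ (a,k) * mexp d (M t) $$ (k,c))"
      using a c BtC by (intro mult_entry) auto
    also have "\<dots> = (\<Sum>k<d. Bt $$ (a,k) * (E t * Ut $$ (k,c)))"
      using W_eq tS c unfolding Ut_def by (intro sum.cong refl) auto
    finally have "((- \<i> * sq) \<cdot>\<^sub>m (B t * mexp d (M t))) $$ (a,c) = (- \<i> * sq) * (E t * (\<Sum>k<d. Bt $$ (a,k) * Ut $$ (k,c)))"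
      by (simp add: sum_distrib_left mult_ac)
    then show ?thesis by (simp add: algebra_simps)
  qed
  ultimately have D1: "((\<lambda>s. E s * U s $$ (a,c)) has_vector_derivative ((- \<i> * sq) \<cdot>\<^sub>m (B t * mexp d (M t))) $$ (a,c)) (at t within S)"
    by simp
  show "((\<lambda>s. mexp d (M s) $$ (a,c)) has_vector_derivative ((- \<i> * sq) \<cdot>\<^sub>m (B t * mexp d (M t))) $$ (a,c)) (at t within {t0..T})"
    unfolding S_def[symmetric] by (rule has_vector_derivative_transform[OF tS _ D1]) (use W_eq a c in auto)
qed


lemma gen_LC: "su_generators d L dd ff \<Longrightarrow> \<forall>l<d\<^sup>2 - 1. L l \<in> carrier_mat d d"
  by (simp add: su_generators_def hermitian_mat_def)

lemma gen_tr0: "su_generators d L dd ff \<Longrightarrow> l < d\<^sup>2 - 1 \<Longrightarrow> mtrace (L l) = 0"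
  by (simp add: su_generators_def)

lemma trace_LLW:
  assumes gen: "su_generators d L dd ff" and j: "j < d\<^sup>2 - 1" and k: "k < d\<^sup>2 - 1"
    and WC: "W \<in> carrier_mat d d"
  shows "mtrace (L j * L k * W) = (if j = k then complex_of_real (2 / real d) else 0) * mtrace W
     + (\<Sum>m<d\<^sup>2 - 1. (complex_of_real (dd j k m) + \<i> * complex_of_real (ff j k m)) * mtrace (L m * W))"
proof -
  define \<alpha> where "\<alpha> = (if j = k then complex_of_real (2 / real d) else 0)"
  define lc where "lc = lincomb d (d\<^sup>2 - 1) (\<lambda>m. complex_of_real (dd j k m) + \<i> * complex_of_real (ff j k m)) L"
  have LC: "\<forall>l<d\<^sup>2 - 1. L l \<in> carrier_mat d d" by (rule gen_LC[OF gen])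
  have prod: "L j * L k = \<alpha> \<cdot>\<^sub>m 1\<^sub>m d + lc"
    using gen j k unfolding su_generators_def \<alpha>_def lc_def by blast
  have lcC: "lc \<in> carrier_mat d d" unfolding lc_def by simp
  have "L j * L k * W = \<alpha> \<cdot>\<^sub>m 1\<^sub>m d * W + lc * W"
    unfolding prod by (rule add_mult_distrib_mat[OF _ lcC WC]) simp
  also have "\<alpha> \<cdot>\<^sub>m 1\<^sub>m d * W = \<alpha> \<cdot>\<^sub>m W"
    using WC by (simp add: mult_smult_assoc_mat[OF one_carrier_mat WC] left_one_d)
  finally have "mtrace (L j * L k * W) = mtrace (\<alpha> \<cdot>\<^sub>m W + lc * W)" by simp
  also have "\<dots> = \<alpha> * mtrace W + mtrace (lc * W)"
    using WC lcC by (simp add: mtrace_add[of _ d] mtrace_smult[of _ d])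
  also have "mtrace (lc * W) = (\<Sum>m<d\<^sup>2 - 1. (complex_of_real (dd j k m) + \<i> * complex_of_real (ff j k m)) * mtrace (L m * W))"
    unfolding lc_def by (rule trace_lincomb_left[OF WC LC])
  finally show ?thesis unfolding \<alpha>_def .
qed

lemma struct_cyc:
  assumes gen: "su_generators d L dd ff" and j: "j < d\<^sup>2 - 1" and k: "k < d\<^sup>2 - 1" and m: "m < d\<^sup>2 - 1"
  shows "dd j k m = dd k m j \<and> ff j k m = ff k m j"
proof -
  have LC: "\<forall>l<d\<^sup>2 - 1. L l \<in> carrier_mat d d" by (rule gen_LC[OF gen])
  have T3: "mtrace (L a * L b * L c) = 2 * (complex_of_real (dd a b c) + \<i> * complex_of_real (ff a b c))"
    if a: "a < d\<^sup>2 - 1" and b: "b < d\<^sup>2 - 1" and c: "c < d\<^sup>2 - 1" for a b c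
  proof -
    have "mtrace (L a * L b * L c) = (if a = b then complex_of_real (2 / real d) else 0) * mtrace (L c)
      + (\<Sum>m'<d\<^sup>2 - 1. (complex_of_real (dd a b m') + \<i> * complex_of_real (ff a b m')) * mtrace (L m' * L c))"
      using LC c by (intro trace_LLW[OF gen a b]) auto
    also have "(\<Sum>m'<d\<^sup>2 - 1. (complex_of_real (dd a b m') + \<i> * complex_of_real (ff a b m')) * mtrace (L m' * L c))
        = (\<Sum>m'<d\<^sup>2 - 1. if m' = c then (complex_of_real (dd a b m') + \<i> * complex_of_real (ff a b m')) * 2 else 0)"
    proof (rule sum.cong[OF refl])
      fix m' assume "m' \<in> {..<d\<^sup>2 - 1}"
      then have "mtrace (L m' * L c) = (if m' = c then 2 else 0)"
        using gen c unfolding su_generators_def by blast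
      then show "(complex_of_real (dd a b m') + \<i> * complex_of_real (ff a b m')) * mtrace (L m' * L c) =
           (if m' = c then (complex_of_real (dd a b m') + \<i> * complex_of_real (ff a b m')) * 2 else 0)"
        by simp
    qed
    also have "\<dots> = (complex_of_real (dd a b c) + \<i> * complex_of_real (ff a b c)) * 2"
      using c by (simp add: sum.delta)
    finally show ?thesis using gen_tr0[OF gen c] by simp
  qed
  have "mtrace (L j * L k * L m) = mtrace (L j * (L k * L m))"
    using LC j k m by (simp add: assoc_d[where n=d])
  also have "\<dots> = mtrace ((L k * L m) * L j)"
    using LC j k m by (intro mtrace_comm[of _ d d]) auto
  finally have "2 * (complex_of_real (dd j k m) + \<i> * complex_of_real (ff j k m)) =
                2 * (complex_of_real (dd k m j) + \<i> * complex_of_real (ff k m j))"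
    using T3[OF j k m] T3[OF k m j] by simp
  then have "(2::complex) = 0 \<or> complex_of_real (dd j k m) + \<i> * complex_of_real (ff j k m) =
                complex_of_real (dd k m j) + \<i> * complex_of_real (ff k m j)" by (simp only: mult_cancel_left)
  then have e: "complex_of_real (dd j k m) + \<i> * complex_of_real (ff j k m) =
                complex_of_real (dd k m j) + \<i> * complex_of_real (ff k m j)" by simp
  have "dd j k m = dd k m j" using arg_cong[OF e, of Re] by simp
  moreover have "ff j k m = ff k m j" using arg_cong[OF e, of Im] by simp
  ultimately show ?thesis by simp
qed

lemma vd_divide:
  fixes f :: "real \<Rightarrow> complex"
  assumes "(f has_vector_derivative f') F"
  shows "((\<lambda>x. f x / c) has_vector_derivative f' / c) F"
  using has_vector_derivative_mult_left[OF assms, of "inverse c"] by (simp add: divide_inverse)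

lemma ALG:
  assumes gen: "su_generators d L dd ff" and d2: "d \<ge> 2" and j: "j < d\<^sup>2 - 1"
    and WC: "W \<in> carrier_mat d d"
    and sq: "sq = complex_of_real (sqrt (real d / 2))" and cc: "cc = - \<i> * sq"
  shows "cc * (cc * (\<Sum>k<d\<^sup>2 - 1. complex_of_real (b k) * mtrace (L j * L k * W)))
       = - mtrace W * complex_of_real (b j)
         + sq * (\<Sum>k<d\<^sup>2 - 1. \<Sum>m<d\<^sup>2 - 1. (complex_of_real (ff k m j) - \<i> * complex_of_real (dd k m j))
                 * complex_of_real (b k) * (cc * mtrace (L m * W)))"
proof -
  define N where "N = d\<^sup>2 - 1"
  have jN: "j < N" using j unfolding N_def .
  have ccsq: "cc * cc = - complex_of_real (real d / 2)"
    unfolding cc sq by (simp add: algebra_simps of_real_mult[symmetric])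
  have dnz: "complex_of_real (real d) \<noteq> 0" using d2 by simp
  have "(\<Sum>k<N. complex_of_real (b k) * mtrace (L j * L k * W))
      = (\<Sum>k<N. (if k = j then complex_of_real (b k) * complex_of_real (2 / real d) * mtrace W else 0)
           + (\<Sum>m<N. complex_of_real (b k) * ((complex_of_real (dd j k m) + \<i> * complex_of_real (ff j k m)) * mtrace (L m * W))))"
    using jN WC unfolding N_def
    by (intro sum.cong refl) (auto simp: trace_LLW[OF gen j] sum_distrib_left algebra_simps)
  also have "\<dots> = complex_of_real (b j) * complex_of_real (2 / real d) * mtrace W
      + (\<Sum>k<N. \<Sum>m<N. complex_of_real (b k) * ((complex_of_real (dd j k m) + \<i> * complex_of_real (ff j k m)) * mtrace (L m * W)))"
    using jN by (simp add: sum.distrib)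
  finally have e1: "(\<Sum>k<N. complex_of_real (b k) * mtrace (L j * L k * W)) = \<dots>" .
  have e2: "cc * (cc * (complex_of_real (b k) * ((complex_of_real (dd j k m) + \<i> * complex_of_real (ff j k m)) * mtrace (L m * W))))
      = sq * ((complex_of_real (ff k m j) - \<i> * complex_of_real (dd k m j)) * complex_of_real (b k) * (cc * mtrace (L m * W)))"
    if "k < N" "m < N" for k m
  proof -
    have "dd j k m = dd k m j \<and> ff j k m = ff k m j"
      using struct_cyc[OF gen j] that unfolding N_def by blast
    then show ?thesis unfolding cc by (simp add: algebra_simps)
  qed
  have "cc * (cc * (\<Sum>k<N. complex_of_real (b k) * mtrace (L j * L k * W)))
     = cc * cc * (complex_of_real (b j) * complex_of_real (2 / real d) * mtrace W)
       + (\<Sum>k<N. \<Sum>m<N. cc * (cc * (complex_of_real (b k) * ((complex_of_real (dd j k m) + \<i> * complex_of_real (ff j k m)) * mtrace (L m * W)))))"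
    unfolding e1 by (simp add: algebra_simps sum_distrib_left)
  also have "cc * cc * (complex_of_real (b j) * complex_of_real (2 / real d) * mtrace W) = - mtrace W * complex_of_real (b j)"
    unfolding ccsq using dnz by (simp add: field_simps)
  also have "(\<Sum>k<N. \<Sum>m<N. cc * (cc * (complex_of_real (b k) * ((complex_of_real (dd j k m) + \<i> * complex_of_real (ff j k m)) * mtrace (L m * W)))))
     = sq * (\<Sum>k<N. \<Sum>m<N. (complex_of_real (ff k m j) - \<i> * complex_of_real (dd k m j)) * complex_of_real (b k) * (cc * mtrace (L m * W)))"
  proof -
    have "(\<Sum>k<N. \<Sum>m<N. cc * (cc * (complex_of_real (b k) * ((complex_of_real (dd j k m) + \<i> * complex_of_real (ff j k m)) * mtrace (L m * W)))))
       = (\<Sum>k<N. \<Sum>m<N. sq * ((complex_of_real (ff k m j) - \<i> * complex_of_real (dd k m j)) * complex_of_real (b k) * (cc * mtrace (L m * W))))"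
      by (intro sum.cong refl e2) auto
    then show ?thesis by (simp only: sum_distrib_left)
  qed
  finally show ?thesis unfolding N_def .
qed

theorem theorem1:
  fixes d :: nat and L :: "nat \<Rightarrow> complex mat" and dd ff :: "nat \<Rightarrow> nat \<Rightarrow> nat \<Rightarrow> real"
    and t0 T :: real and b0 :: "real \<Rightarrow> real" and b :: "real \<Rightarrow> nat \<Rightarrow> real"
    and n dn :: "real \<Rightarrow> nat \<Rightarrow> real" and U :: "real \<Rightarrow> complex mat"
  assumes d2: "d \<ge> 2"
    and gen: "su_generators d L dd ff"
    and tT: "t0 < T"
    and b0_cont: "continuous_on {t0..T} b0"
    and b_cont: "\<forall>j < d\<^sup>2 - 1. continuous_on {t0..T} (\<lambda>t. b t j)"
    and n_deriv: "\<forall>j < d\<^sup>2 - 1. \<forall>t \<in> {t0..T}.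
                    ((\<lambda>s. n s j) has_real_derivative dn t j) (at t within {t0..T})"
    and dn_cont: "\<forall>j < d\<^sup>2 - 1. continuous_on {t0..T} (\<lambda>t. dn t j)"
    and n_init: "\<forall>j < d\<^sup>2 - 1. n t0 j = 0"
    and U_carrier: "\<forall>t \<in> {t0..T}. U t \<in> carrier_mat d d"
    and U_ode: "\<forall>t \<in> {t0..T}. \<forall>a < d. \<forall>c < d.
        ((\<lambda>s. U s $$ (a,c)) has_vector_derivative
           (- \<i> * ((complex_of_real (b0 t) \<cdot>\<^sub>m 1\<^sub>m d
                    + complex_of_real (sqrt (real d / 2)) \<cdot>\<^sub>m
                        lincomb d (d\<^sup>2 - 1) (\<lambda>j. complex_of_real (b t j)) L) * U t) $$ (a,c)))
         (at t within {t0..T})"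
    and U_init: "U t0 = 1\<^sub>m d"
    and U_formula: "\<forall>t \<in> {t0..T}.
        U t = exp (- \<i> * complex_of_real (integral {t0..t} b0)) \<cdot>\<^sub>m
              mexp d ((- \<i> * complex_of_real (sqrt (real d / 2))) \<cdot>\<^sub>m
                 lincomb d (d\<^sup>2 - 1) (\<lambda>j. complex_of_real (n t j)) L)"
  shows
    \<comment> \<open>the given functions solve the Cauchy problem\<close>
    "(let u0 = (\<lambda>t. Kd d L (n t) / of_nat d);
          u = (\<lambda>t j. pderiv_j j (Kd d L) (n t) / of_nat d)
      in u0 t0 = 1 \<and> (\<forall>j < d\<^sup>2 - 1. u t0 j = 0) \<and>
         (\<forall>t \<in> {t0..T}.
            (u0 has_vector_derivative (\<Sum>j < d\<^sup>2 - 1. complex_of_real (b t j) * u t j))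
              (at t within {t0..T}) \<and>
            (\<forall>j < d\<^sup>2 - 1. ((\<lambda>s. u s j) has_vector_derivative
               (- u0 t * complex_of_real (b t j)
                + complex_of_real (sqrt (real d / 2)) *
                  (\<Sum>k < d\<^sup>2 - 1. \<Sum>m < d\<^sup>2 - 1.
                     (complex_of_real (ff k m j) - \<i> * complex_of_real (dd k m j))
                     * complex_of_real (b t k) * u t m)))
               (at t within {t0..T}))))
     \<comment> \<open>and it is the unique solution\<close>
     \<and> (\<forall>v0 v. v0 t0 = 1 \<and> (\<forall>j < d\<^sup>2 - 1. v t0 j = 0) \<and>
         (\<forall>t \<in> {t0..T}.
            (v0 has_vector_derivative (\<Sum>j < d\<^sup>2 - 1. complex_of_real (b t j) * v t j))
              (at t within {t0..T}) \<and>
            (\<forall>j < d\<^sup>2 - 1. ((\<lambda>s. v s j) has_vector_derivative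
               (- v0 t * complex_of_real (b t j)
                + complex_of_real (sqrt (real d / 2)) *
                  (\<Sum>k < d\<^sup>2 - 1. \<Sum>m < d\<^sup>2 - 1.
                     (complex_of_real (ff k m j) - \<i> * complex_of_real (dd k m j))
                     * complex_of_real (b t k) * v t m)))
               (at t within {t0..T})))
         \<longrightarrow> (\<forall>t \<in> {t0..T}. v0 t = Kd d L (n t) / of_nat d \<and>
               (\<forall>j < d\<^sup>2 - 1. v t j = pderiv_j j (Kd d L) (n t) / of_nat d)))
     \<comment> \<open>(i)\<close>
     \<and> (\<forall>t \<in> {t0<..<T}.
          (\<Sum>j < d\<^sup>2 - 1. pderiv_j j (Kd d L) (n t) * complex_of_real (dn t j - b t j)) = 0)
     \<comment> \<open>(ii)\<close>
     \<and> (\<forall>t \<in> {t0<..<T}. \<forall>j < d\<^sup>2 - 1.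
          (\<Sum>l < d\<^sup>2 - 1. pderiv_j j (pderiv_j l (Kd d L)) (n t) * complex_of_real (dn t l))
          = - complex_of_real (b t j) * Kd d L (n t)
            + complex_of_real (sqrt (real d / 2)) *
              (\<Sum>k < d\<^sup>2 - 1. \<Sum>m < d\<^sup>2 - 1.
                 (complex_of_real (ff k m j) - \<i> * complex_of_real (dd k m j))
                 * complex_of_real (b t k) * pderiv_j m (Kd d L) (n t)))"
proof -
  define N where "N = d\<^sup>2 - 1"
  define sq where "sq = complex_of_real (sqrt (real d / 2))"
  define cc where "cc = - \<i> * sq"
  define S where "S = {t0..T}"
  have LC: "\<forall>l<N. L l \<in> carrier_mat d d" using gen_LC[OF gen] unfolding N_def .
  have dnz: "(of_nat d :: complex) \<noteq> 0" using d2 by simp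
  have K_eq: "Kd d L r = mtrace (1\<^sub>m d * mexp d (Am d N L cc r))" for r
    by (simp add: Kd_def Am_def N_def cc_def sq_def left_one_d)
  have pK: "pderiv_j j (Kd d L) r = cc * mtrace (L j * mexp d (Am d N L cc r))" if j: "j < N" for r j
  proof -
    have LjC: "L j \<in> carrier_mat d d" using LC j by auto
    have "((\<lambda>s. mtrace (1\<^sub>m d * mexp d (Am d N L cc (r(j := s))))) has_vector_derivative
            cc * hh d (1\<^sub>m d) (L j) (Am d N L cc r)) (at (r j))"
      by (rule coord_deriv[OF LC j one_carrier_mat])
    then have D: "((\<lambda>s. Kd d L (r(j := s))) has_vector_derivative cc * mtrace (L j * mexp d (Am d N L cc r))) (at (r j))"
      unfolding K_eq hh_one[OF Am_carrier LjC] .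
    show ?thesis unfolding pderiv_j_def by (rule vector_derivative_at[OF D])
  qed
  have ppK: "pderiv_j j (pderiv_j l (Kd d L)) r = cc * (cc * hh d (L l) (L j) (Am d N L cc r))"
    if j: "j < N" and l: "l < N" for r j l
  proof -
    have LlC: "L l \<in> carrier_mat d d" using LC l by auto
    have fe: "pderiv_j l (Kd d L) = (\<lambda>r. cc * mtrace (L l * mexp d (Am d N L cc r)))"
      by (rule ext) (rule pK[OF l])
    have "((\<lambda>s. mtrace (L l * mexp d (Am d N L cc (r(j := s))))) has_vector_derivative
            cc * hh d (L l) (L j) (Am d N L cc r)) (at (r j))"
      by (rule coord_deriv[OF LC j LlC])
    then have D: "((\<lambda>s. cc * mtrace (L l * mexp d (Am d N L cc (r(j := s))))) has_vector_derivative
            cc * (cc * hh d (L l) (L j) (Am d N L cc r))) (at (r j))"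
      by (rule has_vector_derivative_mult_right)
    show ?thesis unfolding fe pderiv_j_def by (rule vector_derivative_at[OF D])
  qed
  define W where "W = (\<lambda>s. mexp d (Am d N L cc (n s)))"
  have WC: "W s \<in> carrier_mat d d" for s by (simp add: W_def)
  define Bm where "Bm = (\<lambda>t. lincomb d N (\<lambda>j. complex_of_real (b t j)) L)"
  have BmC: "\<And>s. Bm s \<in> carrier_mat d d" by (simp add: Bm_def)
  have U_ode': "\<forall>t\<in>{t0..T}. \<forall>a<d. \<forall>c<d. ((\<lambda>s. U s $$ (a,c)) has_vector_derivative
        (- \<i> * ((complex_of_real (b0 t) \<cdot>\<^sub>m 1\<^sub>m d + sq \<cdot>\<^sub>m Bm t) * U t) $$ (a,c))) (at t within {t0..T})"
    using U_ode unfolding Bm_def sq_def N_def .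
  have U_formula': "\<forall>t\<in>{t0..T}. U t = exp (- \<i> * complex_of_real (integral {t0..t} b0)) \<cdot>\<^sub>m mexp d (Am d N L cc (n t))"
    using U_formula unfolding Am_def cc_def sq_def N_def .
  have Wmhd: "mhd d W (cc \<cdot>\<^sub>m (Bm t * W t)) t {t0..T}" if t: "t \<in> {t0..T}" for t
    using W_deriv[OF b0_cont BmC U_carrier U_ode' U_formula' t] unfolding W_def cc_def .
  have Wd: "((\<lambda>s. mtrace (P * W s)) has_vector_derivative
       cc * (\<Sum>k<N. complex_of_real (b t k) * mtrace (P * L k * W t))) (at t within {t0..T})"
    if t: "t \<in> {t0..T}" and PC: "P \<in> carrier_mat d d" for t P
  proof -
    have "((\<lambda>s. mtrace (P * W s)) has_vector_derivative mtrace (P * (cc \<cdot>\<^sub>m (Bm t * W t)))) (at t within {t0..T})"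
      by (rule mhd_trace[OF PC WC _ Wmhd[OF t]]) (simp add: BmC WC)
    moreover have "mtrace (P * (cc \<cdot>\<^sub>m (Bm t * W t))) = cc * (\<Sum>k<N. complex_of_real (b t k) * mtrace (P * L k * W t))"
    proof -
      have "P * (cc \<cdot>\<^sub>m (Bm t * W t)) = cc \<cdot>\<^sub>m (P * (Bm t * W t))"
        using PC BmC WC by (intro mult_smult_distrib[of _ d d _ d]) auto
      also have "P * (Bm t * W t) = P * Bm t * W t"
        using PC BmC WC by (intro assoc_d[symmetric]) auto
      finally have "mtrace (P * (cc \<cdot>\<^sub>m (Bm t * W t))) = cc * mtrace (P * Bm t * W t)"
        using PC BmC WC by (simp add: mtrace_smult[of _ d])
      also have "mtrace (P * Bm t * W t) = (\<Sum>k<N. complex_of_real (b t k) * mtrace (P * L k * W t))"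
        unfolding Bm_def by (rule trace_lincomb[OF PC WC LC])
      finally show ?thesis .
    qed
    ultimately show ?thesis by simp
  qed
  have Cd: "((\<lambda>s. mtrace (P * W s)) has_vector_derivative
       cc * (\<Sum>l<N. complex_of_real (dn t l) * hh d P (L l) (Am d N L cc (n t)))) (at t within {t0..T})"
    if t: "t \<in> {t0..T}" and PC: "P \<in> carrier_mat d d" for t P
    unfolding W_def by (rule curve_deriv[OF LC PC n_deriv[folded N_def] dn_cont[folded N_def] t])
  have t0S: "t0 \<in> {t0..T}" using tT by auto
  have W0: "W t0 = 1\<^sub>m d"
  proof -
    have "U t0 = exp (- \<i> * complex_of_real (integral {t0..t0} b0)) \<cdot>\<^sub>m W t0"
      using U_formula' t0S unfolding W_def by auto
    then have U0: "U t0 = 1 \<cdot>\<^sub>m W t0" by simp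
    have "1 \<cdot>\<^sub>m W t0 = W t0" by (rule eq_matI) (use WC in auto)
    then show ?thesis using U0 U_init by simp
  qed
  define u0 where "u0 = (\<lambda>t. Kd d L (n t) / of_nat d)"
  define u where "u = (\<lambda>t j. pderiv_j j (Kd d L) (n t) / of_nat d)"
  have u0_eq: "u0 t = mtrace (W t) / of_nat d" for t
    unfolding u0_def K_eq W_def by (simp add: left_one_d)
  have u_eq: "u t j = cc * mtrace (L j * W t) / of_nat d" if "j < N" for t j
    unfolding u_def W_def using pK[OF that] by simp
  have u0_t0: "u0 t0 = 1" using dnz by (simp add: u0_eq W0 mtrace_one)
  have u_t0: "u t0 j = 0" if j: "j < N" for j
  proof -
    have "L j * 1\<^sub>m d = L j" using LC j by (intro right_mult_one_mat) auto
    then show ?thesis using gen_tr0[OF gen j[unfolded N_def]] by (simp add: u_eq[OF j] W0)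
  qed
  have du0: "(u0 has_vector_derivative (\<Sum>j<N. complex_of_real (b t j) * u t j)) (at t within {t0..T})"
    if t: "t \<in> {t0..T}" for t
  proof -
    have D: "((\<lambda>s. mtrace (1\<^sub>m d * W s) / of_nat d) has_vector_derivative
        cc * (\<Sum>k<N. complex_of_real (b t k) * mtrace (1\<^sub>m d * L k * W t)) / of_nat d) (at t within {t0..T})"
      by (rule vd_divide[OF Wd[OF t one_carrier_mat]])
    have e1: "(\<lambda>s. mtrace (1\<^sub>m d * W s) / of_nat d) = u0" by (rule ext) (simp add: u0_eq left_one_d WC)
    have e2: "(\<Sum>k<N. complex_of_real (b t k) * mtrace (1\<^sub>m d * L k * W t)) = (\<Sum>k<N. complex_of_real (b t k) * mtrace (L k * W t))"
      by (intro sum.cong refl) (use LC in \<open>simp add: left_one_d\<close>)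
    have e3: "(\<Sum>j<N. complex_of_real (b t j) * u t j) = (\<Sum>j<N. complex_of_real (b t j) * (cc * mtrace (L j * W t) / of_nat d))"
      by (intro sum.cong refl) (simp add: u_eq)
    have e4: "cc * (\<Sum>k<N. complex_of_real (b t k) * mtrace (L k * W t)) / of_nat d = (\<Sum>j<N. complex_of_real (b t j) * (cc * mtrace (L j * W t) / of_nat d))"
      by (simp add: sum_distrib_left sum_divide_distrib mult_ac)
    show ?thesis using D unfolding e1 e2 e3 e4 .
  qed
  have du: "((\<lambda>s. u s j) has_vector_derivative
       (- u0 t * complex_of_real (b t j) + sq * (\<Sum>k<N. \<Sum>m<N. (complex_of_real (ff k m j) - \<i> * complex_of_real (dd k m j))
           * complex_of_real (b t k) * u t m))) (at t within {t0..T})"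
    if t: "t \<in> {t0..T}" and j: "j < N" for t j
  proof -
    have LjC: "L j \<in> carrier_mat d d" using LC j by auto
    have D: "((\<lambda>s. cc * mtrace (L j * W s) / of_nat d) has_vector_derivative
        cc * (cc * (\<Sum>k<N. complex_of_real (b t k) * mtrace (L j * L k * W t))) / of_nat d) (at t within {t0..T})"
      by (rule vd_divide[OF has_vector_derivative_mult_right[OF Wd[OF t LjC]]])
    have e1: "(\<lambda>s. cc * mtrace (L j * W s) / of_nat d) = (\<lambda>s. u s j)" by (rule ext) (simp add: u_eq[OF j])
    have alg: "cc * (cc * (\<Sum>k<N. complex_of_real (b t k) * mtrace (L j * L k * W t)))
       = - mtrace (W t) * complex_of_real (b t j)
         + sq * (\<Sum>k<N. \<Sum>m<N. (complex_of_real (ff k m j) - \<i> * complex_of_real (dd k m j))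
                 * complex_of_real (b t k) * (cc * mtrace (L m * W t)))"
      using ALG[OF gen d2 j[unfolded N_def] WC sq_def cc_def, of "b t"] unfolding N_def .
    have e2: "(\<Sum>k<N. \<Sum>m<N. (complex_of_real (ff k m j) - \<i> * complex_of_real (dd k m j)) * complex_of_real (b t k) * u t m)
        = (\<Sum>k<N. \<Sum>m<N. (complex_of_real (ff k m j) - \<i> * complex_of_real (dd k m j))
                 * complex_of_real (b t k) * (cc * mtrace (L m * W t))) / of_nat d"
    proof -
      have "(\<Sum>k<N. \<Sum>m<N. (complex_of_real (ff k m j) - \<i> * complex_of_real (dd k m j)) * complex_of_real (b t k) * u t m)
        = (\<Sum>k<N. \<Sum>m<N. (complex_of_real (ff k m j) - \<i> * complex_of_real (dd k m j))
                 * complex_of_real (b t k) * (cc * mtrace (L m * W t)) / of_nat d)"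
        by (intro sum.cong refl) (simp add: u_eq)
      then show ?thesis by (simp add: sum_divide_distrib)
    qed
    have e3: "cc * (cc * (\<Sum>k<N. complex_of_real (b t k) * mtrace (L j * L k * W t))) / of_nat d
       = - u0 t * complex_of_real (b t j) + sq * (\<Sum>k<N. \<Sum>m<N. (complex_of_real (ff k m j) - \<i> * complex_of_real (dd k m j))
           * complex_of_real (b t k) * u t m)"
      unfolding alg e2 u0_eq using dnz by (simp add: field_simps)
    show ?thesis using D unfolding e1 e3 .
  qed
  have P1: "u0 t0 = 1 \<and> (\<forall>j<N. u t0 j = 0) \<and>
      (\<forall>t\<in>{t0..T}. (u0 has_vector_derivative (\<Sum>j<N. complex_of_real (b t j) * u t j)) (at t within {t0..T}) \<and>
        (\<forall>j<N. ((\<lambda>s. u s j) has_vector_derivative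
           (- u0 t * complex_of_real (b t j) + sq * (\<Sum>k<N. \<Sum>m<N. (complex_of_real (ff k m j) - \<i> * complex_of_real (dd k m j))
           * complex_of_real (b t k) * u t m))) (at t within {t0..T})))"
    using u0_t0 u_t0 du0 du by blast
  define Cf where "Cf = (\<lambda>k m j. complex_of_real (ff k m j) - \<i> * complex_of_real (dd k m j))"
  have P2: "\<forall>v0 v. v0 t0 = 1 \<and> (\<forall>j<N. v t0 j = 0) \<and>
      (\<forall>t\<in>{t0..T}. (v0 has_vector_derivative (\<Sum>j<N. complex_of_real (b t j) * v t j)) (at t within {t0..T}) \<and>
        (\<forall>j<N. ((\<lambda>s. v s j) has_vector_derivative
           (- v0 t * complex_of_real (b t j) + sq * (\<Sum>k<N. \<Sum>m<N. (complex_of_real (ff k m j) - \<i> * complex_of_real (dd k m j))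
           * complex_of_real (b t k) * v t m))) (at t within {t0..T})))
      \<longrightarrow> (\<forall>t\<in>{t0..T}. v0 t = u0 t \<and> (\<forall>j<N. v t j = u t j))"
  proof (intro allI impI)
    fix v0 :: "real \<Rightarrow> complex" and v :: "real \<Rightarrow> nat \<Rightarrow> complex"
    assume H: "v0 t0 = 1 \<and> (\<forall>j<N. v t0 j = 0) \<and>
      (\<forall>t\<in>{t0..T}. (v0 has_vector_derivative (\<Sum>j<N. complex_of_real (b t j) * v t j)) (at t within {t0..T}) \<and>
        (\<forall>j<N. ((\<lambda>s. v s j) has_vector_derivative
           (- v0 t * complex_of_real (b t j) + sq * (\<Sum>k<N. \<Sum>m<N. (complex_of_real (ff k m j) - \<i> * complex_of_real (dd k m j))
           * complex_of_real (b t k) * v t m))) (at t within {t0..T})))"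
    have Hv0: "v0 t0 = 1" using H by blast
    have Hv: "v t0 j = 0" if "j < N" for j using H that by blast
    have Hd0: "(v0 has_vector_derivative (\<Sum>j<N. complex_of_real (b t j) * v t j)) (at t within {t0..T})"
      if "t \<in> {t0..T}" for t using H that by blast
    have Hd: "((\<lambda>s. v s j) has_vector_derivative
           (- v0 t * complex_of_real (b t j) + sq * (\<Sum>k<N. \<Sum>m<N. Cf k m j * complex_of_real (b t k) * v t m))) (at t within {t0..T})"
      if "t \<in> {t0..T}" "j < N" for t j using H that unfolding Cf_def by blast
    have du': "((\<lambda>s. u s j) has_vector_derivative
           (- u0 t * complex_of_real (b t j) + sq * (\<Sum>k<N. \<Sum>m<N. Cf k m j * complex_of_real (b t k) * u t m))) (at t within {t0..T})"
      if "t \<in> {t0..T}" "j < N" for t j using du[OF that] unfolding Cf_def .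
    define I where "I = insert None (Some ` {..<N})"
    define w0 where "w0 = (\<lambda>s. v0 s - u0 s)"
    define w where "w = (\<lambda>s j. v s j - u s j)"
    define y where "y = (\<lambda>q s. case q of None \<Rightarrow> w0 s | Some j \<Rightarrow> w s j)"
    define y' where "y' = (\<lambda>q s. case q of None \<Rightarrow> (\<Sum>j<N. complex_of_real (b s j) * w s j)
        | Some j \<Rightarrow> - w0 s * complex_of_real (b s j) + sq * (\<Sum>k<N. \<Sum>m<N. Cf k m j * complex_of_real (b s k) * w s m))"
    have fin: "finite I" unfolding I_def by simp
    have bc: "continuous_on {t0..T} (\<lambda>s. \<Sum>j<N. \<bar>b s j\<bar>)"
      using b_cont unfolding N_def by (intro continuous_intros) auto
    obtain Bb where Bb: "\<forall>s\<in>{t0..T}. (\<Sum>j<N. \<bar>b s j\<bar>) \<le> Bb"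
      using cont_bound[OF bc] by blast
    have bb: "\<bar>b s j\<bar> \<le> Bb" if "s \<in> {t0..T}" "j < N" for s j
      using order_trans[OF member_le_sum[of j "{..<N}" "\<lambda>j. \<bar>b s j\<bar>"]] Bb that by auto
    have Bb0: "0 \<le> Bb" using Bb t0S order_trans[OF sum_nonneg] by (metis abs_ge_zero)
    define CC where "CC = (\<Sum>k<N. \<Sum>m<N. \<Sum>j<N. cmod (Cf k m j))"
    have CC0: "0 \<le> CC" unfolding CC_def by (intro sum_nonneg) auto
    define C where "C = Bb * (1 + cmod sq * CC)"
    have C0: "0 \<le> C" unfolding C_def using Bb0 CC0 by simp
    have BbC: "Bb \<le> C" unfolding C_def using Bb0 CC0 by (simp add: algebra_simps)
    have sumI: "(\<Sum>q\<in>I. cmod (y q s)) = cmod (w0 s) + (\<Sum>j<N. cmod (w s j))" for s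
      unfolding I_def y_def by (subst sum.insert) (auto simp: sum.reindex)
    have der: "(y q has_vector_derivative y' q t) (at t within {t0..T})" if q: "q \<in> I" and t: "t \<in> {t0..T}" for q t
    proof (cases q)
      case None
      have "((\<lambda>s. v0 s - u0 s) has_vector_derivative
          (\<Sum>j<N. complex_of_real (b t j) * v t j) - (\<Sum>j<N. complex_of_real (b t j) * u t j)) (at t within {t0..T})"
        by (rule has_vector_derivative_diff[OF Hd0[OF t] du0[OF t]])
      moreover have "(\<Sum>j<N. complex_of_real (b t j) * v t j) - (\<Sum>j<N. complex_of_real (b t j) * u t j)
          = (\<Sum>j<N. complex_of_real (b t j) * w t j)"
        unfolding w_def by (simp add: sum_subtractf[symmetric] right_diff_distrib)
      ultimately show ?thesis using None unfolding y_def y'_def w0_def by simp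
    next
      case (Some j)
      then have j: "j < N" using q unfolding I_def by auto
      have "((\<lambda>s. v s j - u s j) has_vector_derivative
          (- v0 t * complex_of_real (b t j) + sq * (\<Sum>k<N. \<Sum>m<N. Cf k m j * complex_of_real (b t k) * v t m))
          - (- u0 t * complex_of_real (b t j) + sq * (\<Sum>k<N. \<Sum>m<N. Cf k m j * complex_of_real (b t k) * u t m)))
          (at t within {t0..T})"
        by (rule has_vector_derivative_diff[OF Hd[OF t j] du'[OF t j]])
      moreover have "(- v0 t * complex_of_real (b t j) + sq * (\<Sum>k<N. \<Sum>m<N. Cf k m j * complex_of_real (b t k) * v t m))
          - (- u0 t * complex_of_real (b t j) + sq * (\<Sum>k<N. \<Sum>m<N. Cf k m j * complex_of_real (b t k) * u t m))
          = - w0 t * complex_of_real (b t j) + sq * (\<Sum>k<N. \<Sum>m<N. Cf k m j * complex_of_real (b t k) * w t m)"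
      proof -
        have s1: "(\<Sum>k<N. \<Sum>m<N. Cf k m j * complex_of_real (b t k) * v t m) - (\<Sum>k<N. \<Sum>m<N. Cf k m j * complex_of_real (b t k) * u t m)
            = (\<Sum>k<N. \<Sum>m<N. Cf k m j * complex_of_real (b t k) * w t m)"
          unfolding w_def by (simp add: sum_subtractf[symmetric] right_diff_distrib)
        have "(- v0 t * complex_of_real (b t j) + sq * (\<Sum>k<N. \<Sum>m<N. Cf k m j * complex_of_real (b t k) * v t m))
          - (- u0 t * complex_of_real (b t j) + sq * (\<Sum>k<N. \<Sum>m<N. Cf k m j * complex_of_real (b t k) * u t m))
          = - (v0 t - u0 t) * complex_of_real (b t j) + sq * ((\<Sum>k<N. \<Sum>m<N. Cf k m j * complex_of_real (b t k) * v t m) - (\<Sum>k<N. \<Sum>m<N. Cf k m j * complex_of_real (b t k) * u t m))"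
          by (simp add: algebra_simps)
        then show ?thesis unfolding s1 w0_def by simp
      qed
      ultimately show ?thesis using Some unfolding y_def y'_def w_def by simp
    qed
    have bnd: "cmod (y' q t) \<le> C * (\<Sum>k\<in>I. cmod (y k t))" if q: "q \<in> I" and t: "t \<in> {t0..T}" for q t
    proof -
      define Y where "Y = (\<Sum>k\<in>I. cmod (y k t))"
      have Y: "Y = cmod (w0 t) + (\<Sum>j<N. cmod (w t j))" unfolding Y_def by (rule sumI)
      have sw0: "0 \<le> (\<Sum>j<N. cmod (w t j))" by (intro sum_nonneg) auto
      have Y0: "0 \<le> Y" unfolding Y using sw0 by simp
      have wY: "cmod (w t m) \<le> Y" if "m < N" for m
        using member_le_sum[of m "{..<N}" "\<lambda>j. cmod (w t j)"] that unfolding Y by (auto intro: order_trans)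
      have w0Y: "cmod (w0 t) \<le> Y" unfolding Y using sw0 by simp
      show ?thesis
      proof (cases q)
        case None
        have "cmod (\<Sum>j<N. complex_of_real (b t j) * w t j) \<le> (\<Sum>j<N. cmod (complex_of_real (b t j) * w t j))"
          by (rule norm_sum)
        also have "\<dots> \<le> (\<Sum>j<N. Bb * cmod (w t j))"
          using bb[OF t] by (intro sum_mono) (auto simp: norm_mult intro!: mult_right_mono)
        also have "\<dots> = Bb * (\<Sum>j<N. cmod (w t j))" by (simp add: sum_distrib_left)
        also have "\<dots> \<le> C * Y" using BbC Bb0 sw0 Y by (intro mult_mono) auto
        finally show ?thesis using None unfolding y'_def Y_def by simp
      next
        case (Some j)
        then have j: "j < N" using q unfolding I_def by auto
        have Cj: "(\<Sum>k<N. \<Sum>m<N. cmod (Cf k m j)) \<le> CC"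
          unfolding CC_def using j by (intro sum_mono member_le_sum) auto
        have "cmod (\<Sum>k<N. \<Sum>m<N. Cf k m j * complex_of_real (b t k) * w t m)
            \<le> (\<Sum>k<N. \<Sum>m<N. cmod (Cf k m j * complex_of_real (b t k) * w t m))"
          by (rule order_trans[OF norm_sum sum_mono[OF norm_sum]])
        also have "\<dots> \<le> (\<Sum>k<N. \<Sum>m<N. cmod (Cf k m j) * (Bb * Y))"
        proof (intro sum_mono)
          fix k m assume k: "k \<in> {..<N}" and m: "m \<in> {..<N}"
          have "\<bar>b t k\<bar> * cmod (w t m) \<le> Bb * Y"
            using bb[OF t] wY k m Bb0 by (intro mult_mono) auto
          then show "cmod (Cf k m j * complex_of_real (b t k) * w t m) \<le> cmod (Cf k m j) * (Bb * Y)"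
            by (simp add: norm_mult mult.assoc mult_left_mono)
        qed
        also have "\<dots> = Bb * Y * (\<Sum>k<N. \<Sum>m<N. cmod (Cf k m j))"
          by (simp add: sum_distrib_left sum_distrib_right mult_ac)
        also have "\<dots> \<le> Bb * Y * CC" using Cj Bb0 Y0 by (intro mult_left_mono) auto
        finally have S: "cmod (\<Sum>k<N. \<Sum>m<N. Cf k m j * complex_of_real (b t k) * w t m) \<le> Bb * Y * CC" .
        have "cmod (- w0 t * complex_of_real (b t j) + sq * (\<Sum>k<N. \<Sum>m<N. Cf k m j * complex_of_real (b t k) * w t m))
           \<le> cmod (w0 t) * \<bar>b t j\<bar> + cmod sq * cmod (\<Sum>k<N. \<Sum>m<N. Cf k m j * complex_of_real (b t k) * w t m)"
          using norm_triangle_ineq[of "- w0 t * complex_of_real (b t j)" "sq * (\<Sum>k<N. \<Sum>m<N. Cf k m j * complex_of_real (b t k) * w t m)"]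
          by (simp add: norm_mult)
        also have "\<dots> \<le> Y * Bb + cmod sq * (Bb * Y * CC)"
          using w0Y bb[OF t j] S Y0 by (intro add_mono mult_mono mult_left_mono) auto
        also have "\<dots> = C * Y" unfolding C_def by (simp add: algebra_simps)
        finally show ?thesis using Some unfolding y'_def Y_def by simp
      qed
    qed
    have init: "y q t0 = 0" if "q \<in> I" for q
      using that Hv0 Hv u0_t0 u_t0 unfolding I_def y_def w0_def w_def by auto
    have z: "y q t = 0" if "q \<in> I" "t \<in> {t0..T}" for q t
      by (rule ode_unique[OF fin C0 der bnd init that])
    show "\<forall>t\<in>{t0..T}. v0 t = u0 t \<and> (\<forall>j<N. v t j = u t j)"
    proof (intro ballI conjI allI impI)
      fix t assume t: "t \<in> {t0..T}"
      show "v0 t = u0 t" using z[of None t] t unfolding I_def y_def w0_def by simp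
      fix j assume "j < N"
      then show "v t j = u t j" using z[of "Some j" t] t unfolding I_def y_def w_def by simp
    qed
  qed
  have P3: "\<forall>t\<in>{t0<..<T}. (\<Sum>j<N. pderiv_j j (Kd d L) (n t) * complex_of_real (dn t j - b t j)) = 0"
  proof
    fix t assume t: "t \<in> {t0<..<T}"
    then have tS: "t \<in> {t0..T}" by auto
    have ti: "t \<in> interior {t0..T}" using t by simp
    have D1: "((\<lambda>s. mtrace (1\<^sub>m d * W s)) has_vector_derivative
       cc * (\<Sum>k<N. complex_of_real (b t k) * mtrace (1\<^sub>m d * L k * W t))) (at t)"
      using Wd[OF tS one_carrier_mat] unfolding at_within_interior[OF ti] .
    have D2: "((\<lambda>s. mtrace (1\<^sub>m d * W s)) has_vector_derivative
       cc * (\<Sum>l<N. complex_of_real (dn t l) * hh d (1\<^sub>m d) (L l) (Am d N L cc (n t)))) (at t)"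
      using Cd[OF tS one_carrier_mat] unfolding at_within_interior[OF ti] .
    have eq: "cc * (\<Sum>k<N. complex_of_real (b t k) * mtrace (1\<^sub>m d * L k * W t)) =
              cc * (\<Sum>l<N. complex_of_real (dn t l) * hh d (1\<^sub>m d) (L l) (Am d N L cc (n t)))"
      by (rule vector_derivative_unique_at[OF D1 D2])
    have e1: "(\<Sum>k<N. complex_of_real (b t k) * mtrace (1\<^sub>m d * L k * W t)) = (\<Sum>k<N. complex_of_real (b t k) * mtrace (L k * W t))"
      by (intro sum.cong refl) (use LC in \<open>simp add: left_one_d\<close>)
    have e2: "(\<Sum>l<N. complex_of_real (dn t l) * hh d (1\<^sub>m d) (L l) (Am d N L cc (n t))) = (\<Sum>l<N. complex_of_real (dn t l) * mtrace (L l * W t))"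
      by (intro sum.cong refl) (use LC in \<open>simp add: hh_one W_def\<close>)
    have "(\<Sum>j<N. pderiv_j j (Kd d L) (n t) * complex_of_real (dn t j - b t j))
        = (\<Sum>j<N. cc * (complex_of_real (dn t j) * mtrace (L j * W t)) - cc * (complex_of_real (b t j) * mtrace (L j * W t)))"
      by (intro sum.cong refl) (simp add: pK W_def algebra_simps)
    also have "\<dots> = cc * (\<Sum>l<N. complex_of_real (dn t l) * mtrace (L l * W t)) - cc * (\<Sum>k<N. complex_of_real (b t k) * mtrace (L k * W t))"
      by (simp add: sum_subtractf sum_distrib_left)
    also have "\<dots> = 0" using eq unfolding e1 e2 by auto
    finally show "(\<Sum>j<N. pderiv_j j (Kd d L) (n t) * complex_of_real (dn t j - b t j)) = 0" .
  qed
  have P4: "\<forall>t\<in>{t0<..<T}. \<forall>j<N.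
          (\<Sum>l<N. pderiv_j j (pderiv_j l (Kd d L)) (n t) * complex_of_real (dn t l))
          = - complex_of_real (b t j) * Kd d L (n t)
            + sq * (\<Sum>k<N. \<Sum>m<N. (complex_of_real (ff k m j) - \<i> * complex_of_real (dd k m j))
                 * complex_of_real (b t k) * pderiv_j m (Kd d L) (n t))"
  proof (intro ballI allI impI)
    fix t j assume t: "t \<in> {t0<..<T}" and j: "j < N"
    then have tS: "t \<in> {t0..T}" by auto
    have ti: "t \<in> interior {t0..T}" using t by simp
    have LjC: "L j \<in> carrier_mat d d" using LC j by auto
    define X where "X = Am d N L cc (n t)"
    have D1: "((\<lambda>s. mtrace (L j * W s)) has_vector_derivative
       cc * (\<Sum>k<N. complex_of_real (b t k) * mtrace (L j * L k * W t))) (at t)"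
      using Wd[OF tS LjC] unfolding at_within_interior[OF ti] .
    have D2: "((\<lambda>s. mtrace (L j * W s)) has_vector_derivative
       cc * (\<Sum>l<N. complex_of_real (dn t l) * hh d (L j) (L l) X)) (at t)"
      using Cd[OF tS LjC] unfolding at_within_interior[OF ti] X_def .
    have eq: "cc * (\<Sum>k<N. complex_of_real (b t k) * mtrace (L j * L k * W t)) =
              cc * (\<Sum>l<N. complex_of_real (dn t l) * hh d (L j) (L l) X)"
      by (rule vector_derivative_unique_at[OF D1 D2])
    have alg: "cc * (cc * (\<Sum>k<N. complex_of_real (b t k) * mtrace (L j * L k * W t)))
       = - mtrace (W t) * complex_of_real (b t j)
         + sq * (\<Sum>k<N. \<Sum>m<N. (complex_of_real (ff k m j) - \<i> * complex_of_real (dd k m j))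
                 * complex_of_real (b t k) * (cc * mtrace (L m * W t)))"
      using ALG[OF gen d2 j[unfolded N_def] WC sq_def cc_def, of "b t"] unfolding N_def .
    have "(\<Sum>l<N. pderiv_j j (pderiv_j l (Kd d L)) (n t) * complex_of_real (dn t l))
        = (\<Sum>l<N. cc * (cc * (complex_of_real (dn t l) * hh d (L j) (L l) X)))"
    proof (rule sum.cong[OF refl])
      fix l assume "l \<in> {..<N}"
      then have l: "l < N" by simp
      have LlC: "L l \<in> carrier_mat d d" using LC l by auto
      show "pderiv_j j (pderiv_j l (Kd d L)) (n t) * complex_of_real (dn t l) = cc * (cc * (complex_of_real (dn t l) * hh d (L j) (L l) X))"
        unfolding ppK[OF j l] X_def hh_sym[OF Am_carrier LjC LlC] by (simp add: mult_ac)
    qed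
    also have "\<dots> = cc * (cc * (\<Sum>l<N. complex_of_real (dn t l) * hh d (L j) (L l) X))"
      by (simp add: sum_distrib_left)
    also have "\<dots> = cc * (cc * (\<Sum>k<N. complex_of_real (b t k) * mtrace (L j * L k * W t)))"
      using eq by auto
    also have "\<dots> = - mtrace (W t) * complex_of_real (b t j)
         + sq * (\<Sum>k<N. \<Sum>m<N. (complex_of_real (ff k m j) - \<i> * complex_of_real (dd k m j))
                 * complex_of_real (b t k) * (cc * mtrace (L m * W t)))" by (rule alg)
    also have "\<dots> = - complex_of_real (b t j) * Kd d L (n t)
            + sq * (\<Sum>k<N. \<Sum>m<N. (complex_of_real (ff k m j) - \<i> * complex_of_real (dd k m j))
                 * complex_of_real (b t k) * pderiv_j m (Kd d L) (n t))"
    proof -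
      have "Kd d L (n t) = mtrace (W t)" unfolding K_eq W_def by (simp add: left_one_d)
      moreover have "(\<Sum>k<N. \<Sum>m<N. (complex_of_real (ff k m j) - \<i> * complex_of_real (dd k m j))
                 * complex_of_real (b t k) * (cc * mtrace (L m * W t))) =
          (\<Sum>k<N. \<Sum>m<N. (complex_of_real (ff k m j) - \<i> * complex_of_real (dd k m j))
                 * complex_of_real (b t k) * pderiv_j m (Kd d L) (n t))"
        by (intro sum.cong refl) (simp add: pK W_def)
      ultimately show ?thesis by simp
    qed
    finally show "(\<Sum>l<N. pderiv_j j (pderiv_j l (Kd d L)) (n t) * complex_of_real (dn t l))
          = - complex_of_real (b t j) * Kd d L (n t)
            + sq * (\<Sum>k<N. \<Sum>m<N. (complex_of_real (ff k m j) - \<i> * complex_of_real (dd k m j))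
                 * complex_of_real (b t k) * pderiv_j m (Kd d L) (n t))" .
  qed
  show ?thesis
    unfolding Let_def using P1 P2 P3 P4 unfolding u0_def u_def N_def sq_def by blast
qed

end
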